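(* If $(S_1,S_2,P)$ is a $\Gamma_3$-contraction, then $\left(\tfrac{S_1}{3}+\omega\tfrac{S_2}{3},\,\omega P\right)$ is a $\Gamma_2$-contraction for every $\omega\in\mathbb T$.
   Context: $\Gamma_2=\{(z_1+z_2,z_1z_2):|z_1|,|z_2|\le1\}$ and $\Gamma_3=\{(z_1+z_2+z_3,z_1z_2+z_2z_3+z_3z_1,z_1z_2z_3):|z_i|\le1\}$. For $m=2,3$, a $\Gamma_m$-contraction is a tuple of commuting bounded Hilbert space operators whose Taylor joint spectrum lies in $\Gamma_m$ and such that $\|f(T_1,\dots,T_m)\|\le\sup_{\Gamma_m}|f|$ for every polynomial $f$ in $m$ variables. *)

theory Defs
  imports "HOL-Analysis.Analysis"
begin

text \<open>The distribution has no complex vector spaces; we introduce complex scalar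
multiplication (compatible with the real one) and a complex inner product
(linear in the second argument, conjugate-linear in the first) inducing the norm.\<close>

class complex_inner = real_normed_vector +
  fixes scaleC :: "complex \<Rightarrow> 'a \<Rightarrow> 'a"
    and cinner :: "'a \<Rightarrow> 'a \<Rightarrow> complex"
  assumes scaleC_of_real: "scaleC (complex_of_real r) x = scaleR r x"
    and scaleC_add_right: "scaleC a (x + y) = scaleC a x + scaleC a y"
    and scaleC_add_left: "scaleC (a + b) x = scaleC a x + scaleC b x"
    and scaleC_scaleC: "scaleC a (scaleC b x) = scaleC (a * b) x"
    and scaleC_one: "scaleC 1 x = x"
    and norm_scaleC: "norm (scaleC a x) = cmod a * norm x"
    and cinner_commute: "cinner x y = cnj (cinner y x)"
    and cinner_add_left: "cinner (x + y) z = cinner x z + cinner y z"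
    and cinner_scaleC_left: "cinner (scaleC a x) y = cnj a * cinner x y"
    and norm_eq_sqrt_cinner: "norm x = sqrt (Re (cinner x x))"

class chilbert_space = complex_inner + complete_space

definition bounded_clinear :: "('a::complex_inner \<Rightarrow> 'a) \<Rightarrow> bool" where
  "bounded_clinear T \<longleftrightarrow> bounded_linear T \<and> (\<forall>c x. T (scaleC c x) = scaleC c (T x))"

text \<open>For a tuple T 0, ..., T (m-1) and a point lam in C^m, the Koszul cochains of
degree k are functions on the k-element subsets of {0..<m} (zero elsewhere), and
d_k x J = sum over j in J of (-1)^(position of j in J) (T j - lam j) x (J - {j}).\<close>

definition koszul_chain :: "nat \<Rightarrow> nat \<Rightarrow> (nat set \<Rightarrow> 'a::complex_inner) \<Rightarrow> bool" where
  "koszul_chain m k x \<longleftrightarrow> (\<forall>J. \<not> (J \<subseteq> {..<m} \<and> card J = k) \<longrightarrow> x J = 0)"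

definition koszul_d :: "nat \<Rightarrow> (nat \<Rightarrow> 'a::complex_inner \<Rightarrow> 'a) \<Rightarrow> (nat \<Rightarrow> complex) \<Rightarrow> nat
      \<Rightarrow> (nat set \<Rightarrow> 'a) \<Rightarrow> (nat set \<Rightarrow> 'a)" where
  "koszul_d m T lam k x J =
     (if J \<subseteq> {..<m} \<and> card J = Suc k then
        (\<Sum>j\<in>J. scaleC ((-1) ^ card {i\<in>J. i < j})
                   (T j (x (J - {j})) - scaleC (lam j) (x (J - {j}))))
      else 0)"

definition koszul_exact :: "nat \<Rightarrow> (nat \<Rightarrow> 'a::complex_inner \<Rightarrow> 'a) \<Rightarrow> (nat \<Rightarrow> complex) \<Rightarrow> bool" where
  "koszul_exact m T lam \<longleftrightarrow>
     (\<forall>k\<le>m. \<forall>x::nat set \<Rightarrow> 'a. koszul_chain m k x \<and> koszul_d m T lam k x = (\<lambda>_. 0) \<longrightarrow>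
        (if k = 0 then x = (\<lambda>_. 0)
         else (\<exists>y. koszul_chain m (k - 1) y \<and> koszul_d m T lam (k - 1) y = x)))"

definition taylor_spectrum :: "nat \<Rightarrow> (nat \<Rightarrow> 'a::complex_inner \<Rightarrow> 'a) \<Rightarrow> (nat \<Rightarrow> complex) set" where
  "taylor_spectrum m T = {lam. (\<forall>i. i \<ge> m \<longrightarrow> lam i = 0) \<and> \<not> koszul_exact m T lam}"

definition Gamma2 :: "(complex \<times> complex) set" where
  "Gamma2 = {(z1 + z2, z1 * z2) | z1 z2. cmod z1 \<le> 1 \<and> cmod z2 \<le> 1}"

definition Gamma3 :: "(complex \<times> complex \<times> complex) set" where
  "Gamma3 = {(z1 + z2 + z3, z1 * z2 + z2 * z3 + z3 * z1, z1 * z2 * z3) | z1 z2 z3.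
              cmod z1 \<le> 1 \<and> cmod z2 \<le> 1 \<and> cmod z3 \<le> 1}"

definition poly2_eval :: "(nat \<times> nat \<Rightarrow> complex) \<Rightarrow> complex \<times> complex \<Rightarrow> complex" where
  "poly2_eval c z = (\<Sum>(a, b)\<in>{\<alpha>. c \<alpha> \<noteq> 0}. c (a, b) * fst z ^ a * snd z ^ b)"

definition poly2_op :: "(nat \<times> nat \<Rightarrow> complex) \<Rightarrow> ('a::complex_inner \<Rightarrow> 'a) \<Rightarrow> ('a \<Rightarrow> 'a) \<Rightarrow> 'a \<Rightarrow> 'a" where
  "poly2_op c T1 T2 x = (\<Sum>(a, b)\<in>{\<alpha>. c \<alpha> \<noteq> 0}. scaleC (c (a, b)) ((T1 ^^ a) ((T2 ^^ b) x)))"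

definition poly3_eval :: "(nat \<times> nat \<times> nat \<Rightarrow> complex) \<Rightarrow> complex \<times> complex \<times> complex \<Rightarrow> complex" where
  "poly3_eval c z = (\<Sum>(a, b, d)\<in>{\<alpha>. c \<alpha> \<noteq> 0}.
      c (a, b, d) * fst z ^ a * fst (snd z) ^ b * snd (snd z) ^ d)"

definition poly3_op :: "(nat \<times> nat \<times> nat \<Rightarrow> complex) \<Rightarrow> ('a::complex_inner \<Rightarrow> 'a) \<Rightarrow> ('a \<Rightarrow> 'a)
      \<Rightarrow> ('a \<Rightarrow> 'a) \<Rightarrow> 'a \<Rightarrow> 'a" where
  "poly3_op c T1 T2 T3 x = (\<Sum>(a, b, d)\<in>{\<alpha>. c \<alpha> \<noteq> 0}.
      scaleC (c (a, b, d)) ((T1 ^^ a) ((T2 ^^ b) ((T3 ^^ d) x))))"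

definition gamma2_contraction :: "('a::chilbert_space \<Rightarrow> 'a) \<Rightarrow> ('a \<Rightarrow> 'a) \<Rightarrow> bool" where
  "gamma2_contraction T1 T2 \<longleftrightarrow>
     bounded_clinear T1 \<and> bounded_clinear T2 \<and> T1 \<circ> T2 = T2 \<circ> T1 \<and>
     (\<forall>lam \<in> taylor_spectrum 2 (\<lambda>i. if i = 0 then T1 else T2). (lam 0, lam 1) \<in> Gamma2) \<and>
     (\<forall>c. finite {\<alpha>. c \<alpha> \<noteq> 0} \<longrightarrow>
        onorm (poly2_op c T1 T2) \<le> (SUP z\<in>Gamma2. cmod (poly2_eval c z)))"

definition gamma3_contraction :: "('a::chilbert_space \<Rightarrow> 'a) \<Rightarrow> ('a \<Rightarrow> 'a) \<Rightarrow> ('a \<Rightarrow> 'a) \<Rightarrow> bool" where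
  "gamma3_contraction T1 T2 T3 \<longleftrightarrow>
     bounded_clinear T1 \<and> bounded_clinear T2 \<and> bounded_clinear T3 \<and>
     T1 \<circ> T2 = T2 \<circ> T1 \<and> T1 \<circ> T3 = T3 \<circ> T1 \<and> T2 \<circ> T3 = T3 \<circ> T2 \<and>
     (\<forall>lam \<in> taylor_spectrum 3 (\<lambda>i. if i = 0 then T1 else if i = 1 then T2 else T3).
        (lam 0, lam 1, lam 2) \<in> Gamma3) \<and>
     (\<forall>c. finite {\<alpha>. c \<alpha> \<noteq> 0} \<longrightarrow>
        onorm (poly3_op c T1 T2 T3) \<le> (SUP z\<in>Gamma3. cmod (poly3_eval c z)))"

end

theory Submission
  imports Defs
begin

lemma scaleC_zero_left[simp]: "scaleC 0 (x::'a::complex_inner) = 0"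
  using scaleC_of_real[of 0 x] by simp

lemma scaleC_zero_right[simp]: "scaleC c (0::'a::complex_inner) = 0"
proof -
  have "scaleC c (0::'a) = scaleC c 0 + scaleC c 0" using scaleC_add_right[of c 0 0] by simp
  then show ?thesis by simp
qed

lemma scaleC_minus1: "scaleC (-1) (x::'a::complex_inner) = - x"
  using scaleC_of_real[of "-1" x] by simp

lemma scaleC_minus_left: "scaleC (- c) (x::'a::complex_inner) = - scaleC c x"
proof -
  have "scaleC (- c) x = scaleC (-1) (scaleC c x)" by (simp add: scaleC_scaleC)
  then show ?thesis by (simp add: scaleC_minus1)
qed

lemma scaleC_minus_right: "scaleC c (- x::'a::complex_inner) = - scaleC c x"
proof -
  have "scaleC c (- x) = scaleC c (scaleC (-1) x)" by (simp add: scaleC_minus1)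
  also have "\<dots> = scaleC (-1) (scaleC c x)" by (simp add: scaleC_scaleC)
  finally show ?thesis by (simp add: scaleC_minus1)
qed

lemma scaleC_diff_right: "scaleC c (x - y::'a::complex_inner) = scaleC c x - scaleC c y"
proof -
  have "scaleC c (x - y) = scaleC c (x + - y)" by simp
  also have "\<dots> = scaleC c x + scaleC c (- y)" by (rule scaleC_add_right)
  finally show ?thesis by (simp add: scaleC_minus_right)
qed

lemma scaleC_diff_left: "scaleC (a - b) (x::'a::complex_inner) = scaleC a x - scaleC b x"
proof -
  have "scaleC (a - b) x = scaleC (a + - b) x" by simp
  also have "\<dots> = scaleC a x + scaleC (- b) x" by (rule scaleC_add_left)
  finally show ?thesis by (simp add: scaleC_minus_left)
qed

lemma scaleC_sum_right: "scaleC c (\<Sum>i\<in>I. f i) = (\<Sum>i\<in>I. scaleC c (f i::'a::complex_inner))"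
  by (induction I rule: infinite_finite_induct) (auto simp: scaleC_add_right)

lemma scaleC_sum_left: "scaleC (\<Sum>i\<in>I. f i) (x::'a::complex_inner) = (\<Sum>i\<in>I. scaleC (f i) x)"
  by (induction I rule: infinite_finite_induct) (auto simp: scaleC_add_left)

lemma bounded_linear_scaleC: "bounded_linear (\<lambda>x::'a::complex_inner. scaleC c x)"
proof (rule bounded_linear_intro[where K="cmod c"])
  fix x y :: 'a show "scaleC c (x + y) = scaleC c x + scaleC c y" by (rule scaleC_add_right)
next
  fix r x
  show "scaleC c (scaleR r x) = scaleR r (scaleC c (x::'a))"
  proof -
    have "scaleC c (scaleR r x) = scaleC c (scaleC (of_real r) x)" by (simp add: scaleC_of_real)
    also have "\<dots> = scaleC (of_real r) (scaleC c x)" by (simp add: scaleC_scaleC mult.commute)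
    finally show ?thesis by (simp add: scaleC_of_real)
  qed
next
  fix x show "norm (scaleC c (x::'a)) \<le> norm x * cmod c" by (simp add: norm_scaleC)
qed

lemma bounded_clinear_linear: "bounded_clinear T \<Longrightarrow> bounded_linear T"
  by (simp add: bounded_clinear_def)

lemma bounded_clinear_scaleC: "bounded_clinear T \<Longrightarrow> T (scaleC c x) = scaleC c (T x)"
  by (simp add: bounded_clinear_def)

lemma bounded_clinear_add: "bounded_clinear T \<Longrightarrow> T (x + y) = T x + T y"
  by (simp add: bounded_clinear_def linear_add bounded_linear.linear)

lemma bounded_clinear_diff: "bounded_clinear T \<Longrightarrow> T (x - y) = T x - T y"
  by (simp add: bounded_clinear_def linear_diff bounded_linear.linear)

lemma bounded_clinear_zero: "bounded_clinear T \<Longrightarrow> T 0 = 0"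
  by (simp add: bounded_clinear_def linear_0 bounded_linear.linear)

lemma bounded_clinear_neg: "bounded_clinear T \<Longrightarrow> T (- x) = - T x"
  by (simp add: bounded_clinear_def linear_neg bounded_linear.linear)

lemma bounded_clinear_sum: "bounded_clinear T \<Longrightarrow> T (\<Sum>i\<in>I. f i) = (\<Sum>i\<in>I. T (f i))"
  by (induction I rule: infinite_finite_induct) (auto simp: bounded_clinear_add bounded_clinear_zero)

lemma bounded_clinear_ident: "bounded_clinear (\<lambda>x. x)"
  by (simp add: bounded_clinear_def bounded_linear_ident)

lemma bounded_clinear_const0: "bounded_clinear (\<lambda>x. 0)"
  by (simp add: bounded_clinear_def bounded_linear_zero)

lemma bounded_clinear_comp: "bounded_clinear S \<Longrightarrow> bounded_clinear T \<Longrightarrow> bounded_clinear (\<lambda>x. S (T x))"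
  unfolding bounded_clinear_def using bounded_linear_compose[of S T] by (auto simp: o_def)

lemma bounded_clinear_plus: "bounded_clinear S \<Longrightarrow> bounded_clinear T \<Longrightarrow> bounded_clinear (\<lambda>x. S x + T x)"
  unfolding bounded_clinear_def using bounded_linear_add[of S T] by (auto simp: scaleC_add_right)

lemma bounded_clinear_smult: "bounded_clinear T \<Longrightarrow> bounded_clinear (\<lambda>x. scaleC c (T x))"
  unfolding bounded_clinear_def using bounded_linear_compose[OF bounded_linear_scaleC[of c], of T]
  by (auto simp: scaleC_scaleC mult.commute)

lemma bounded_clinear_sumf: "(\<And>i. i \<in> I \<Longrightarrow> bounded_clinear (f i)) \<Longrightarrow> bounded_clinear (\<lambda>x. \<Sum>i\<in>I. f i x)"
  by (induction I rule: infinite_finite_induct) (auto intro: bounded_clinear_plus bounded_clinear_const0)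

lemma bounded_clinear_funpow: assumes "bounded_clinear T" shows "bounded_clinear (T ^^ n)"
proof (induction n)
  case 0 show ?case using bounded_clinear_ident by (simp add: id_def)
next
  case (Suc n) then show ?case using bounded_clinear_comp[OF assms Suc.IH] by (simp add: o_def)
qed

lemma funpow_commute_gen: "(\<And>x. f (g x) = g (f x)) \<Longrightarrow> (f ^^ n) (g x) = g ((f ^^ n) x)"
  by (induction n) auto

definition mono3 :: "('a::complex_inner \<Rightarrow> 'a) \<Rightarrow> ('a \<Rightarrow> 'a) \<Rightarrow> ('a \<Rightarrow> 'a) \<Rightarrow> nat \<times> nat \<times> nat \<Rightarrow> 'a \<Rightarrow> 'a" where
  "mono3 T1 T2 T3 \<alpha> x = (T1 ^^ fst \<alpha>) ((T2 ^^ fst (snd \<alpha>)) ((T3 ^^ snd (snd \<alpha>)) x))"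

definition emono3 :: "nat \<times> nat \<times> nat \<Rightarrow> complex \<times> complex \<times> complex \<Rightarrow> complex" where
  "emono3 \<alpha> z = fst z ^ fst \<alpha> * fst (snd z) ^ fst (snd \<alpha>) * snd (snd z) ^ snd (snd \<alpha>)"

lemma poly3_op_alt: "finite U \<Longrightarrow> {\<alpha>. c \<alpha> \<noteq> 0} \<subseteq> U \<Longrightarrow>
  poly3_op c T1 T2 T3 x = (\<Sum>\<alpha>\<in>U. scaleC (c \<alpha>) (mono3 T1 T2 T3 \<alpha> x))"
  unfolding poly3_op_def mono3_def split_beta'
  apply (simp only: prod.collapse) apply (rule sum.mono_neutral_left) apply auto done

lemma poly3_eval_alt: "finite U \<Longrightarrow> {\<alpha>. c \<alpha> \<noteq> 0} \<subseteq> U \<Longrightarrow>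
  poly3_eval c z = (\<Sum>\<alpha>\<in>U. c \<alpha> * emono3 \<alpha> z)"
  unfolding poly3_eval_def emono3_def split_beta'
  apply (simp only: prod.collapse mult.assoc) apply (rule sum.mono_neutral_left) apply auto done

definition P3ok :: "('a::complex_inner \<Rightarrow> 'a) \<Rightarrow> ('a \<Rightarrow> 'a) \<Rightarrow> ('a \<Rightarrow> 'a) \<Rightarrow> ('a \<Rightarrow> 'a)
   \<Rightarrow> (complex \<times> complex \<times> complex \<Rightarrow> complex) \<Rightarrow> bool" where
  "P3ok S1 S2 P F g \<longleftrightarrow> (\<exists>c. finite {\<alpha>. c \<alpha> \<noteq> 0} \<and> (\<forall>x. poly3_op c S1 S2 P x = F x) \<and>
       (\<forall>z. poly3_eval c z = g z))"

lemma P3ok_id: "P3ok S1 S2 P (\<lambda>x. x) (\<lambda>z. 1)"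
proof -
  define c :: "nat \<times> nat \<times> nat \<Rightarrow> complex" where "c = (\<lambda>\<alpha>. if \<alpha> = (0,0,0) then 1 else 0)"
  have s: "{\<alpha>. c \<alpha> \<noteq> 0} \<subseteq> {(0,0,0)}" by (auto simp: c_def)
  have f: "finite {\<alpha>. c \<alpha> \<noteq> 0}" using finite_subset[OF s] by simp
  have "poly3_op c S1 S2 P x = x" for x
    unfolding poly3_op_alt[OF _ s, simplified] by (simp add: c_def mono3_def scaleC_one)
  moreover have "poly3_eval c z = 1" for z
    unfolding poly3_eval_alt[OF _ s, simplified] by (simp add: c_def emono3_def)
  ultimately show ?thesis unfolding P3ok_def using f by blast
qed

lemma P3ok_zero: "P3ok S1 S2 P (\<lambda>x. 0) (\<lambda>z. 0)"
  unfolding P3ok_def by (rule exI[of _ "\<lambda>_. 0"]) (auto simp: poly3_op_def poly3_eval_def)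

lemma P3ok_add: "P3ok S1 S2 P F g \<Longrightarrow> P3ok S1 S2 P G h \<Longrightarrow> P3ok S1 S2 P (\<lambda>x. F x + G x) (\<lambda>z. g z + h z)"
proof -
  assume "P3ok S1 S2 P F g" "P3ok S1 S2 P G h"
  then obtain c d where c: "finite {\<alpha>. c \<alpha> \<noteq> 0}" "\<forall>x. poly3_op c S1 S2 P x = F x" "\<forall>z. poly3_eval c z = g z"
    and d: "finite {\<alpha>. d \<alpha> \<noteq> 0}" "\<forall>x. poly3_op d S1 S2 P x = G x" "\<forall>z. poly3_eval d z = h z"
    unfolding P3ok_def by blast
  let ?U = "{\<alpha>. c \<alpha> \<noteq> 0} \<union> {\<alpha>. d \<alpha> \<noteq> 0}"
  have fU: "finite ?U" using c d by simp
  have s: "{\<alpha>. c \<alpha> + d \<alpha> \<noteq> 0} \<subseteq> ?U" by auto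
  show ?thesis unfolding P3ok_def
  proof (intro exI[of _ "\<lambda>\<alpha>. c \<alpha> + d \<alpha>"] conjI allI)
    show "finite {\<alpha>. c \<alpha> + d \<alpha> \<noteq> 0}" using finite_subset[OF s fU] .
    fix x
    show "poly3_op (\<lambda>\<alpha>. c \<alpha> + d \<alpha>) S1 S2 P x = F x + G x"
      using c(2) d(2) poly3_op_alt[OF fU s, of S1 S2 P x] poly3_op_alt[OF fU, of c S1 S2 P x] poly3_op_alt[OF fU, of d S1 S2 P x]
      by (simp add: scaleC_add_left sum.distrib)
  next
    fix z
    show "poly3_eval (\<lambda>\<alpha>. c \<alpha> + d \<alpha>) z = g z + h z"
      using spec[OF c(3), of z] spec[OF d(3), of z] poly3_eval_alt[OF fU s, of z] poly3_eval_alt[OF fU, of c z] poly3_eval_alt[OF fU, of d z]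
      by (simp add: distrib_right sum.distrib)
  qed
qed

lemma P3ok_scale: "P3ok S1 S2 P F g \<Longrightarrow> P3ok S1 S2 P (\<lambda>x. scaleC k (F x)) (\<lambda>z. k * g z)"
proof -
  assume "P3ok S1 S2 P F g"
  then obtain c where c: "finite {\<alpha>. c \<alpha> \<noteq> 0}" "\<forall>x. poly3_op c S1 S2 P x = F x" "\<forall>z. poly3_eval c z = g z"
    unfolding P3ok_def by blast
  let ?U = "{\<alpha>. c \<alpha> \<noteq> 0}"
  have s: "{\<alpha>. k * c \<alpha> \<noteq> 0} \<subseteq> ?U" by auto
  show ?thesis unfolding P3ok_def
  proof (intro exI[of _ "\<lambda>\<alpha>. k * c \<alpha>"] conjI allI)
    show "finite {\<alpha>. k * c \<alpha> \<noteq> 0}" using finite_subset[OF s c(1)] .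
    fix x
    show "poly3_op (\<lambda>\<alpha>. k * c \<alpha>) S1 S2 P x = scaleC k (F x)"
      using c(2) poly3_op_alt[OF c(1) s, of S1 S2 P x] poly3_op_alt[OF c(1), of c S1 S2 P x]
      by (simp add: scaleC_sum_right scaleC_scaleC)
  next
    fix z
    show "poly3_eval (\<lambda>\<alpha>. k * c \<alpha>) z = k * g z"
      using spec[OF c(3), of z] poly3_eval_alt[OF c(1) s, of z] poly3_eval_alt[OF c(1), of c z]
      by (simp add: sum_distrib_left[symmetric] mult.assoc)
  qed
qed

lemma P3ok_shift:
  fixes h :: "nat \<times> nat \<times> nat \<Rightarrow> nat \<times> nat \<times> nat" and pr :: "nat \<times> nat \<times> nat \<Rightarrow> nat \<times> nat \<times> nat"
    and Q :: "'a::complex_inner \<Rightarrow> 'a" and q :: "complex \<times> complex \<times> complex \<Rightarrow> complex"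
  assumes Q: "bounded_clinear Q"
    and inj: "inj h"
    and hm: "\<And>\<alpha> x. mono3 S1 S2 P (h \<alpha>) x = Q (mono3 S1 S2 P \<alpha> x)"
    and he: "\<And>\<alpha> z. emono3 (h \<alpha>) z = q z * emono3 \<alpha> z"
    and ok: "P3ok S1 S2 P F g"
  shows "P3ok S1 S2 P (\<lambda>x. Q (F x)) (\<lambda>z. q z * g z)"
proof -
  from ok obtain c where c: "finite {\<alpha>. c \<alpha> \<noteq> 0}" "\<forall>x. poly3_op c S1 S2 P x = F x" "\<forall>z. poly3_eval c z = g z"
    unfolding P3ok_def by blast
  define c' where "c' = (\<lambda>\<beta>. if \<beta> \<in> range h then c (inv h \<beta>) else 0)"
  have c'h: "c' (h \<alpha>) = c \<alpha>" for \<alpha> using inj by (simp add: c'_def)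
  let ?U = "h ` {\<alpha>. c \<alpha> \<noteq> 0}"
  have fU: "finite ?U" using c(1) by simp
  have s: "{\<alpha>. c' \<alpha> \<noteq> 0} \<subseteq> ?U"
  proof
    fix \<beta> assume "\<beta> \<in> {\<alpha>. c' \<alpha> \<noteq> 0}"
    then have "\<beta> \<in> range h" "c (inv h \<beta>) \<noteq> 0" by (auto simp: c'_def split: if_splits)
    then show "\<beta> \<in> ?U" by (intro image_eqI[of _ _ "inv h \<beta>"]) (auto simp: f_inv_into_f)
  qed
  have injU: "inj_on h {\<alpha>. c \<alpha> \<noteq> 0}" using inj by (simp add: inj_on_def inj_def)
  show ?thesis unfolding P3ok_def
  proof (intro exI[of _ c'] conjI allI)
    show "finite {\<alpha>. c' \<alpha> \<noteq> 0}" using finite_subset[OF s fU] .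
    fix x
    have "poly3_op c' S1 S2 P x = (\<Sum>\<alpha>\<in>?U. scaleC (c' \<alpha>) (mono3 S1 S2 P \<alpha> x))"
      by (rule poly3_op_alt[OF fU s])
    also have "\<dots> = (\<Sum>\<alpha>\<in>{\<alpha>. c \<alpha> \<noteq> 0}. scaleC (c \<alpha>) (Q (mono3 S1 S2 P \<alpha> x)))"
      by (simp add: sum.reindex[OF injU] c'h hm)
    also have "\<dots> = Q (\<Sum>\<alpha>\<in>{\<alpha>. c \<alpha> \<noteq> 0}. scaleC (c \<alpha>) (mono3 S1 S2 P \<alpha> x))"
      by (simp add: bounded_clinear_sum[OF Q] bounded_clinear_scaleC[OF Q])
    also have "\<dots> = Q (F x)" using c(2) poly3_op_alt[OF c(1) order_refl, of S1 S2 P x] by simp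
    finally show "poly3_op c' S1 S2 P x = Q (F x)" .
  next
    fix z
    have "poly3_eval c' z = (\<Sum>\<alpha>\<in>?U. c' \<alpha> * emono3 \<alpha> z)"
      by (rule poly3_eval_alt[OF fU s])
    also have "\<dots> = (\<Sum>\<alpha>\<in>{\<alpha>. c \<alpha> \<noteq> 0}. c \<alpha> * (q z * emono3 \<alpha> z))"
      by (simp add: sum.reindex[OF injU] c'h he)
    also have "\<dots> = q z * (\<Sum>\<alpha>\<in>{\<alpha>. c \<alpha> \<noteq> 0}. c \<alpha> * emono3 \<alpha> z)"
      by (simp add: sum_distrib_left algebra_simps)
    also have "\<dots> = q z * g z" using spec[OF c(3), of z] poly3_eval_alt[OF c(1) order_refl, of z] by simp
    finally show "poly3_eval c' z = q z * g z" .
  qed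
qed

lemma P3ok_S1:
  assumes "bounded_clinear S1" "P3ok S1 S2 P F g"
  shows "P3ok S1 S2 P (\<lambda>x. S1 (F x)) (\<lambda>z. fst z * g z)"
  by (rule P3ok_shift[OF assms(1), where h="\<lambda>\<alpha>. (Suc (fst \<alpha>), snd \<alpha>)"])
     (auto simp: inj_def mono3_def emono3_def assms(2) prod_eq_iff)

lemma P3ok_S2:
  assumes "bounded_clinear S2" "S1 \<circ> S2 = S2 \<circ> S1" "P3ok S1 S2 P F g"
  shows "P3ok S1 S2 P (\<lambda>x. S2 (F x)) (\<lambda>z. fst (snd z) * g z)"
proof -
  have c: "S1 (S2 x) = S2 (S1 x)" for x using fun_cong[OF assms(2), of x] by simp
  show ?thesis
  by (rule P3ok_shift[OF assms(1), where h="\<lambda>\<alpha>. (fst \<alpha>, Suc (fst (snd \<alpha>)), snd (snd \<alpha>))"])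
     (auto simp: inj_def mono3_def emono3_def assms(3) prod_eq_iff funpow_commute_gen[of S1 S2, OF c])
qed

lemma P3ok_P:
  assumes "bounded_clinear P" "S1 \<circ> P = P \<circ> S1" "S2 \<circ> P = P \<circ> S2" "P3ok S1 S2 P F g"
  shows "P3ok S1 S2 P (\<lambda>x. P (F x)) (\<lambda>z. snd (snd z) * g z)"
proof -
  have c1: "S1 (P x) = P (S1 x)" for x using fun_cong[OF assms(2), of x] by simp
  have c2: "S2 (P x) = P (S2 x)" for x using fun_cong[OF assms(3), of x] by simp
  show ?thesis
  by (rule P3ok_shift[OF assms(1), where h="\<lambda>\<alpha>. (fst \<alpha>, fst (snd \<alpha>), Suc (snd (snd \<alpha>)))"])
     (auto simp: inj_def mono3_def emono3_def assms(4) prod_eq_iff funpow_commute_gen[of S1 P, OF c1] funpow_commute_gen[of S2 P, OF c2])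
qed

lemma Gamma2_bounds: "(s, p) \<in> Gamma2 \<Longrightarrow> cmod s \<le> 2 \<and> cmod p \<le> 1"
proof -
  assume "(s, p) \<in> Gamma2"
  then obtain z1 z2 where z: "s = z1 + z2" "p = z1 * z2" "cmod z1 \<le> 1" "cmod z2 \<le> 1"
    unfolding Gamma2_def by auto
  have "cmod s \<le> cmod z1 + cmod z2" using z(1) norm_triangle_ineq by blast
  moreover have "cmod p \<le> 1" using z by (simp add: norm_mult mult_le_one)
  ultimately show ?thesis using z by simp
qed

lemma Gamma2_ne: "Gamma2 \<noteq> {}"
  unfolding Gamma2_def by (auto intro!: exI[of _ 0])

lemma Gamma3_ne: "Gamma3 \<noteq> {}"
  unfolding Gamma3_def by (auto intro!: exI[of _ 0])

lemma key_ineq: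
  fixes a b :: real
  assumes "0 \<le> a" "a \<le> 1" "0 \<le> b" "b \<le> 1"
  shows "a * (1 - b^2) + b * (1 - a^2) \<le> 1 - a^2 * b^2"
proof -
  have "1 - a^2 * b^2 - (a * (1 - b^2) + b * (1 - a^2)) = (1 - a) * (1 - b) * (1 - a * b)"
    by (simp add: algebra_simps power2_eq_square)
  moreover have "0 \<le> (1 - a) * (1 - b) * (1 - a * b)"
    using assms by (simp add: mult_le_one)
  ultimately show ?thesis by linarith
qed

lemma Gamma2_to_beta:
  assumes "cmod z \<le> 1" "cmod q \<le> 1"
  shows "\<exists>\<beta>. cmod \<beta> \<le> 1 \<and> z + q = \<beta> + cnj \<beta> * (z * q)"
proof (cases "cmod z * cmod q = 1")
  case True
  have "cmod z * cmod q \<le> cmod z" using mult_left_le[OF assms(2) norm_ge_zero[of z]] .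
  then have "cmod z = 1" using True assms(1) by simp
  then have zz1: "cnj z * z = 1" using complex_norm_square[of z] by (simp add: mult.commute)
  have "cnj z * (z * q) = (cnj z * z) * q" by (simp add: mult.assoc)
  then have "z + q = z + cnj z * (z * q)" using zz1 by simp
  then show ?thesis using \<open>cmod z = 1\<close> by (intro exI[of _ z]) simp
next
  case False
  define a where "a = cmod z"
  define b where "b = cmod q"
  have ab: "0 \<le> a" "a \<le> 1" "0 \<le> b" "b \<le> 1" using assms by (auto simp: a_def b_def)
  have "a * b \<le> 1" using ab by (simp add: mult_le_one)
  with False have "a * b < 1" by (simp add: a_def b_def)
  moreover have "(a * b) * (a * b) \<le> (a * b) * 1"
    using \<open>a * b \<le> 1\<close> ab by (intro mult_left_mono) auto
  ultimately have "a^2 * b^2 < 1" by (simp add: power2_eq_square algebra_simps)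
  define D where "D = 1 - a^2 * b^2"
  have D: "D > 0" using \<open>a^2 * b^2 < 1\<close> by (simp add: D_def)
  define num where "num = z * of_real (1 - b^2) + q * of_real (1 - a^2)"
  define \<beta> where "\<beta> = num / of_real D"
  have zz: "cnj z * z = of_real (a^2)" using complex_norm_square[of z] by (simp add: a_def mult.commute)
  have qq: "cnj q * q = of_real (b^2)" using complex_norm_square[of q] by (simp add: b_def mult.commute)
  have D0: "complex_of_real D \<noteq> 0" using D by simp
  have "\<beta> + cnj \<beta> * (z * q) = (num + cnj num * (z * q)) / of_real D"
    by (simp add: \<beta>_def add_divide_distrib)
  also have "num + cnj num * (z * q) = z * of_real (1 - b^2) + q * of_real (1 - a^2) + (cnj z * z) * q * of_real (1 - b^2) + (cnj q * q) * z * of_real (1 - a^2)"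
    by (simp add: num_def algebra_simps)
  also have "\<dots> = (z + q) * of_real D"
    unfolding zz qq D_def by (simp add: algebra_simps)
  also have "(z + q) * of_real D / of_real D = z + q" using D0 by simp
  finally have eq: "z + q = \<beta> + cnj \<beta> * (z * q)" ..
  have "cmod num \<le> a * (1 - b^2) + b * (1 - a^2)"
  proof -
    have "cmod (z * of_real (1 - b^2) + q * of_real (1 - a^2)) \<le> cmod (z * of_real (1 - b^2)) + cmod (q * of_real (1 - a^2))"
      by (rule norm_triangle_ineq)
    also have "\<dots> = a * (1 - b^2) + b * (1 - a^2)"
    proof -
      have "a^2 \<le> 1" "b^2 \<le> 1" using ab by (auto simp: power_le_one)
      then show ?thesis by (simp only: norm_mult norm_of_real) (simp add: a_def b_def)
    qed
    finally show ?thesis by (simp add: num_def)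
  qed
  also have "\<dots> \<le> D" using key_ineq[OF ab] by (simp add: D_def)
  finally have "cmod \<beta> \<le> 1" using D by (simp add: \<beta>_def norm_divide)
  with eq show ?thesis by blast
qed

lemma cmod_diff_sq:
  fixes w \<beta> :: complex
  shows "(cmod (w - \<beta>))^2 - (cmod (1 - cnj \<beta> * w))^2 = ((cmod w)^2 - 1) * (1 - (cmod \<beta>)^2)"
proof -
  have "(cmod (w - \<beta>))^2 = (Re w - Re \<beta>)^2 + (Im w - Im \<beta>)^2" by (simp add: cmod_power2)
  moreover have "(cmod (1 - cnj \<beta> * w))^2 = (1 - (Re \<beta> * Re w + Im \<beta> * Im w))^2 + (Re \<beta> * Im w - Im \<beta> * Re w)^2"
    by (simp only: cmod_power2) (simp add: power2_eq_square algebra_simps)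
  moreover have "(cmod w)^2 = (Re w)^2 + (Im w)^2" "(cmod \<beta>)^2 = (Re \<beta>)^2 + (Im \<beta>)^2" by (simp_all add: cmod_power2)
  ultimately show ?thesis by (simp add: power2_eq_square algebra_simps)
qed


lemma root_bound:
  assumes b: "cmod \<beta> \<le> 1" and p: "cmod p \<le> 1"
    and r: "w^2 - (\<beta> + cnj \<beta> * p) * w + p = 0"
  shows "cmod w \<le> 1"
proof (rule ccontr)
  assume "\<not> cmod w \<le> 1"
  then have w1: "cmod w > 1" by simp
  have "w * (w - \<beta>) - p * (cnj \<beta> * w - 1) = w^2 - (\<beta> + cnj \<beta> * p) * w + p"
    by (simp add: algebra_simps power2_eq_square)
  then have eq: "w * (w - \<beta>) = p * (cnj \<beta> * w - 1)" using r by simp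
  have ww: "1 \<le> (cmod w)^2" using one_le_power[of "cmod w" 2] w1 by simp
  have bb: "(cmod \<beta>)^2 \<le> 1" using b by (simp add: power_le_one)
  have "0 \<le> ((cmod w)^2 - 1) * (1 - (cmod \<beta>)^2)" using ww bb by simp
  then have "(cmod (w - \<beta>))^2 - (cmod (1 - cnj \<beta> * w))^2 \<ge> 0" by (simp only: cmod_diff_sq)
  then have ge: "cmod (w - \<beta>) \<ge> cmod (1 - cnj \<beta> * w)"
    using power2_le_imp_le[of "cmod (1 - cnj \<beta> * w)" "cmod (w - \<beta>)"] by simp
  have "cmod (w * (w - \<beta>)) = cmod (p * (cnj \<beta> * w - 1))" using eq by simp
  then have n: "cmod w * cmod (w - \<beta>) = cmod p * cmod (1 - cnj \<beta> * w)"
    using norm_minus_commute[of "cnj \<beta> * w" 1] by (simp add: norm_mult)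
  show False
  proof (cases "cmod (1 - cnj \<beta> * w) = 0")
    case True
    have "cmod w * cmod (w - \<beta>) = 0" using n True by simp
    moreover have "cmod w \<noteq> 0" using w1 by linarith
    ultimately have "cmod (w - \<beta>) = 0" by simp
    then have "w = \<beta>" by simp
    then show False using w1 b by simp
  next
    case False
    then have pos: "cmod (1 - cnj \<beta> * w) > 0" by simp
    have "cmod p * cmod (1 - cnj \<beta> * w) \<le> cmod (1 - cnj \<beta> * w)"
      using mult_right_mono[OF p, of "cmod (1 - cnj \<beta> * w)"] by simp
    also have "\<dots> < cmod w * cmod (1 - cnj \<beta> * w)" using mult_strict_right_mono[OF w1 pos] by simp
    also have "\<dots> \<le> cmod w * cmod (w - \<beta>)" using mult_left_mono[OF ge, of "cmod w"] by simp
    finally show False using n by simp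
  qed
qed

lemma beta_to_Gamma2:
  assumes b: "cmod \<beta> \<le> 1" and p: "cmod p \<le> 1"
  shows "(\<beta> + cnj \<beta> * p, p) \<in> Gamma2"
proof -
  define s where "s = \<beta> + cnj \<beta> * p"
  define d where "d = csqrt (s^2 - 4 * p)"
  define w1 where "w1 = (s + d) / 2"
  define w2 where "w2 = (s - d) / 2"
  have dd: "d^2 = s^2 - 4 * p" by (simp add: d_def)
  have sum: "w1 + w2 = s" by (simp add: w1_def w2_def field_simps)
  have prod: "w1 * w2 = p"
  proof -
    have "w1 * w2 = (s^2 - d^2) / 4" by (simp add: w1_def w2_def field_simps power2_eq_square)
    then show ?thesis by (simp add: dd)
  qed
  have "w1^2 - s * w1 + p = w1^2 - (w1 + w2) * w1 + w1 * w2" using sum prod by simp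
  also have "\<dots> = 0" by (simp add: algebra_simps power2_eq_square)
  finally have r1: "w1^2 - s * w1 + p = 0" .
  have "w2^2 - s * w2 + p = w2^2 - (w1 + w2) * w2 + w1 * w2" using sum prod by simp
  also have "\<dots> = 0" by (simp add: algebra_simps power2_eq_square)
  finally have r2: "w2^2 - s * w2 + p = 0" .
  have "cmod w1 \<le> 1" using root_bound[OF b p, of w1] r1 by (simp add: s_def)
  moreover have "cmod w2 \<le> 1" using root_bound[OF b p, of w2] r2 by (simp add: s_def)
  ultimately have "(w1 + w2, w1 * w2) \<in> Gamma2" unfolding Gamma2_def by blast
  then show ?thesis using sum prod by (simp add: s_def)
qed

lemma phi_Gamma3:
  fixes \<omega> :: complex
  assumes om: "cmod \<omega> = 1" and z: "(s1, s2, p) \<in> Gamma3"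
  shows "(1/3 * s1 + \<omega>/3 * s2, \<omega> * p) \<in> Gamma2"
proof -
  obtain z1 z2 z3 where zs: "s1 = z1 + z2 + z3" "s2 = z1 * z2 + z2 * z3 + z3 * z1" "p = z1 * z2 * z3"
    and n: "cmod z1 \<le> 1" "cmod z2 \<le> 1" "cmod z3 \<le> 1"
    using z unfolding Gamma3_def by auto
  have q: "cmod (\<omega> * u * v) \<le> 1" if "cmod u \<le> 1" "cmod v \<le> 1" for u v
    using om that by (simp add: norm_mult mult_le_one)
  obtain b1 where b1: "cmod b1 \<le> 1" "z1 + \<omega> * z2 * z3 = b1 + cnj b1 * (z1 * (\<omega> * z2 * z3))"
    using Gamma2_to_beta[OF n(1) q[OF n(2) n(3)]] by blast
  obtain b2 where b2: "cmod b2 \<le> 1" "z2 + \<omega> * z3 * z1 = b2 + cnj b2 * (z2 * (\<omega> * z3 * z1))"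
    using Gamma2_to_beta[OF n(2) q[OF n(3) n(1)]] by blast
  obtain b3 where b3: "cmod b3 \<le> 1" "z3 + \<omega> * z1 * z2 = b3 + cnj b3 * (z3 * (\<omega> * z1 * z2))"
    using Gamma2_to_beta[OF n(3) q[OF n(1) n(2)]] by blast
  define \<beta> where "\<beta> = (b1 + b2 + b3) / 3"
  have "cmod (b1 + b2 + b3) \<le> 3"
    using b1(1) b2(1) b3(1) norm_triangle_ineq[of "b1 + b2" b3] norm_triangle_ineq[of b1 b2] by linarith
  then have bb: "cmod \<beta> \<le> 1" by (simp add: \<beta>_def norm_divide)
  have pp: "cmod (\<omega> * p) \<le> 1" using om n by (simp add: zs norm_mult mult_le_one)
  have "1/3 * s1 + \<omega>/3 * s2 = ((z1 + \<omega> * z2 * z3) + (z2 + \<omega> * z3 * z1) + (z3 + \<omega> * z1 * z2)) / 3"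
    by (simp add: zs field_simps)
  also have "\<dots> = \<beta> + cnj \<beta> * (\<omega> * p)"
    unfolding b1(2) b2(2) b3(2) by (simp add: \<beta>_def zs field_simps)
  finally show ?thesis using beta_to_Gamma2[OF bb pp] by simp
qed

lemma poly2_op_alt: "finite U \<Longrightarrow> {\<alpha>. c \<alpha> \<noteq> 0} \<subseteq> U \<Longrightarrow>
  poly2_op c T1 T2 x = (\<Sum>\<alpha>\<in>U. scaleC (c \<alpha>) ((T1 ^^ fst \<alpha>) ((T2 ^^ snd \<alpha>) x)))"
  unfolding poly2_op_def split_beta'
  apply (simp only: prod.collapse) apply (rule sum.mono_neutral_left) apply auto done

lemma poly2_eval_alt: "finite U \<Longrightarrow> {\<alpha>. c \<alpha> \<noteq> 0} \<subseteq> U \<Longrightarrow>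
  poly2_eval c w = (\<Sum>\<alpha>\<in>U. c \<alpha> * (fst w ^ fst \<alpha> * snd w ^ snd \<alpha>))"
  unfolding poly2_eval_def split_beta'
  apply (simp only: prod.collapse mult.assoc) apply (rule sum.mono_neutral_left) apply auto done

lemma bcl_poly2_op:
  assumes "bounded_clinear T1" "bounded_clinear T2"
  shows "bounded_clinear (poly2_op c T1 T2)"
proof -
  have eq: "poly2_op c T1 T2 = (\<lambda>x. \<Sum>\<alpha>\<in>{\<alpha>. c \<alpha> \<noteq> 0}. scaleC (c \<alpha>) ((T1 ^^ fst \<alpha>) ((T2 ^^ snd \<alpha>) x)))"
    unfolding poly2_op_def split_beta' by (simp only: prod.collapse)
  have "bounded_clinear (\<lambda>x. \<Sum>\<alpha>\<in>{\<alpha>. c \<alpha> \<noteq> 0}. scaleC (c \<alpha>) ((T1 ^^ fst \<alpha>) ((T2 ^^ snd \<alpha>) x)))"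
    apply (rule bounded_clinear_sumf)
    apply (rule bounded_clinear_smult)
    apply (rule bounded_clinear_comp[OF bounded_clinear_funpow[OF assms(1)] bounded_clinear_funpow[OF assms(2)]])
    done
  then show ?thesis using eq by simp
qed

lemma bdd_poly2_Gamma2:
  assumes "finite {\<alpha>. c \<alpha> \<noteq> 0}"
  shows "bdd_above ((\<lambda>w. cmod (poly2_eval c w)) ` Gamma2)"
proof (rule bdd_aboveI2)
  fix w assume w: "w \<in> Gamma2"
  obtain s p where sp: "w = (s, p)" by fastforce
  have b: "cmod s \<le> 2" "cmod p \<le> 1" using Gamma2_bounds w sp by auto
  have "cmod (poly2_eval c w) = cmod (\<Sum>\<alpha>\<in>{\<alpha>. c \<alpha> \<noteq> 0}. c \<alpha> * (fst w ^ fst \<alpha> * snd w ^ snd \<alpha>))"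
    using poly2_eval_alt[OF assms order_refl] by simp
  also have "\<dots> \<le> (\<Sum>\<alpha>\<in>{\<alpha>. c \<alpha> \<noteq> 0}. cmod (c \<alpha> * (fst w ^ fst \<alpha> * snd w ^ snd \<alpha>)))"
    by (rule norm_sum)
  also have "\<dots> \<le> (\<Sum>\<alpha>\<in>{\<alpha>. c \<alpha> \<noteq> 0}. cmod (c \<alpha>) * 2 ^ fst \<alpha>)"
  proof (rule sum_mono)
    fix \<alpha> :: "nat \<times> nat"
    have "cmod s ^ fst \<alpha> \<le> 2 ^ fst \<alpha>" using b by (simp add: power_mono)
    moreover have "cmod p ^ snd \<alpha> \<le> 1" using b by (simp add: power_le_one)
    ultimately have "cmod s ^ fst \<alpha> * cmod p ^ snd \<alpha> \<le> 2 ^ fst \<alpha>"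
      using mult_mono[of "cmod s ^ fst \<alpha>" "2 ^ fst \<alpha>" "cmod p ^ snd \<alpha>" 1] by simp
    then show "cmod (c \<alpha> * (fst w ^ fst \<alpha> * snd w ^ snd \<alpha>)) \<le> cmod (c \<alpha>) * 2 ^ fst \<alpha>"
      by (simp add: sp norm_mult norm_power mult_left_mono)
  qed
  finally show "cmod (poly2_eval c w) \<le> (\<Sum>\<alpha>\<in>{\<alpha>. c \<alpha> \<noteq> 0}. cmod (c \<alpha>) * 2 ^ fst \<alpha>)" .
qed

lemma P3ok_cong: "P3ok S1 S2 P F g \<Longrightarrow> (\<And>x. F x = F' x) \<Longrightarrow> (\<And>z. g z = g' z) \<Longrightarrow> P3ok S1 S2 P F' g'"
proof -
  assume "P3ok S1 S2 P F g" "\<And>x. F x = F' x" "\<And>z. g z = g' z"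
  then have "F = F'" "g = g'" by auto
  then show ?thesis using \<open>P3ok S1 S2 P F g\<close> by simp
qed

lemma P3ok_sum:
  assumes "finite S" "\<And>\<alpha>. \<alpha> \<in> S \<Longrightarrow> P3ok S1 S2 P (F \<alpha>) (g \<alpha>)"
  shows "P3ok S1 S2 P (\<lambda>x. \<Sum>\<alpha>\<in>S. scaleC (k \<alpha>) (F \<alpha> x)) (\<lambda>z. \<Sum>\<alpha>\<in>S. k \<alpha> * g \<alpha> z)"
  using assms
proof (induction S rule: finite_induct)
  case empty
  then show ?case using P3ok_zero by simp
next
  case (insert a S)
  have "P3ok S1 S2 P (\<lambda>x. scaleC (k a) (F a x) + (\<Sum>\<alpha>\<in>S. scaleC (k \<alpha>) (F \<alpha> x)))
         (\<lambda>z. k a * g a z + (\<Sum>\<alpha>\<in>S. k \<alpha> * g \<alpha> z))"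
    using insert by (intro P3ok_add P3ok_scale) auto
  then show ?case using insert by (simp add: sum.insert)
qed

context
  fixes S1 S2 P :: "'a::chilbert_space \<Rightarrow> 'a" and \<omega> :: complex
  assumes bS1: "bounded_clinear S1" and bS2: "bounded_clinear S2" and bP: "bounded_clinear P"
    and c12: "S1 \<circ> S2 = S2 \<circ> S1" and c13: "S1 \<circ> P = P \<circ> S1" and c23: "S2 \<circ> P = P \<circ> S2"
begin

lemma P3ok_mono:
  fixes T1 T2 :: "'a \<Rightarrow> 'a"
  assumes T1: "T1 = (\<lambda>x. scaleC (1/3) (S1 x) + scaleC (\<omega>/3) (S2 x))"
    and T2: "T2 = (\<lambda>x. scaleC \<omega> (P x))"
  shows "P3ok S1 S2 P (\<lambda>x. (T1 ^^ a) ((T2 ^^ b) x))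
           (\<lambda>z. (1/3 * fst z + \<omega>/3 * fst (snd z)) ^ a * (\<omega> * snd (snd z)) ^ b)"
proof -
  have T1s: "(T1 ^^ Suc n) y = scaleC (1/3) (S1 ((T1 ^^ n) y)) + scaleC (\<omega>/3) (S2 ((T1 ^^ n) y))" for n y
    using T1 by simp
  have T2s: "(T2 ^^ Suc n) y = scaleC \<omega> (P ((T2 ^^ n) y))" for n y using T2 by simp
  have aux: "(u * a + v * b) * X = u * (a * X) + v * (b * X)" for u a v b X :: complex
    by (simp add: algebra_simps)
  have B: "P3ok S1 S2 P (\<lambda>x. (T2 ^^ b) x) (\<lambda>z. (\<omega> * snd (snd z)) ^ b)"
  proof (induction b)
    case 0 then show ?case using P3ok_id by simp
  next
    case (Suc b)
    have "P3ok S1 S2 P (\<lambda>x. scaleC \<omega> (P ((T2 ^^ b) x))) (\<lambda>z. \<omega> * (snd (snd z) * (\<omega> * snd (snd z)) ^ b))"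
      by (intro P3ok_scale P3ok_P bP c13 c23 Suc)
    then show ?case by (rule P3ok_cong) (simp_all only: T2s power_Suc mult.assoc)
  qed
  show ?thesis
  proof (induction a)
    case 0 then show ?case using B by simp
  next
    case (Suc a)
    have "P3ok S1 S2 P (\<lambda>x. scaleC (1/3) (S1 ((T1 ^^ a) ((T2 ^^ b) x))) + scaleC (\<omega>/3) (S2 ((T1 ^^ a) ((T2 ^^ b) x))))
       (\<lambda>z. 1/3 * (fst z * ((1/3 * fst z + \<omega>/3 * fst (snd z)) ^ a * (\<omega> * snd (snd z)) ^ b)) +
            \<omega>/3 * (fst (snd z) * ((1/3 * fst z + \<omega>/3 * fst (snd z)) ^ a * (\<omega> * snd (snd z)) ^ b)))"
      by (intro P3ok_add P3ok_scale P3ok_S1 P3ok_S2 bS1 bS2 c12 Suc)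
    then show ?case by (rule P3ok_cong) (simp_all only: T1s aux power_Suc mult.assoc)
  qed
qed

lemma P3ok_poly2:
  fixes T1 T2 :: "'a \<Rightarrow> 'a"
  assumes T1: "T1 = (\<lambda>x. scaleC (1/3) (S1 x) + scaleC (\<omega>/3) (S2 x))"
    and T2: "T2 = (\<lambda>x. scaleC \<omega> (P x))"
    and fin: "finite {\<alpha>. c \<alpha> \<noteq> 0}"
  shows "P3ok S1 S2 P (poly2_op c T1 T2) (\<lambda>z. poly2_eval c (1/3 * fst z + \<omega>/3 * fst (snd z), \<omega> * snd (snd z)))"
proof -
  have "P3ok S1 S2 P (\<lambda>x. \<Sum>\<alpha>\<in>{\<alpha>. c \<alpha> \<noteq> 0}. scaleC (c \<alpha>) ((T1 ^^ fst \<alpha>) ((T2 ^^ snd \<alpha>) x)))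
     (\<lambda>z. \<Sum>\<alpha>\<in>{\<alpha>. c \<alpha> \<noteq> 0}. c \<alpha> * ((1/3 * fst z + \<omega>/3 * fst (snd z)) ^ fst \<alpha> * (\<omega> * snd (snd z)) ^ snd \<alpha>))"
    by (intro P3ok_sum fin P3ok_mono[OF T1 T2])
  then show ?thesis
    by (rule P3ok_cong) (simp_all add: poly2_op_alt[OF fin order_refl] poly2_eval_alt[OF fin order_refl])
qed

end

lemma onorm_poly2:
  fixes S1 S2 P :: "'a::chilbert_space \<Rightarrow> 'a" and \<omega> :: complex and T1 T2 :: "'a \<Rightarrow> 'a"
  assumes g3: "gamma3_contraction S1 S2 P" and om: "cmod \<omega> = 1"
    and T1: "T1 = (\<lambda>x. scaleC (1/3) (S1 x) + scaleC (\<omega>/3) (S2 x))"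
    and T2: "T2 = (\<lambda>x. scaleC \<omega> (P x))"
    and fin: "finite {\<alpha>. c \<alpha> \<noteq> 0}"
  shows "onorm (poly2_op c T1 T2) \<le> (SUP w\<in>Gamma2. cmod (poly2_eval c w))"
proof -
  have g: "bounded_clinear S1" "bounded_clinear S2" "bounded_clinear P"
    "S1 \<circ> S2 = S2 \<circ> S1" "S1 \<circ> P = P \<circ> S1" "S2 \<circ> P = P \<circ> S2"
    using g3 by (simp_all add: gamma3_contraction_def)
  obtain c3 where c3: "finite {\<alpha>. c3 \<alpha> \<noteq> 0}" "\<forall>x. poly3_op c3 S1 S2 P x = poly2_op c T1 T2 x"
    "\<forall>z. poly3_eval c3 z = poly2_eval c (1/3 * fst z + \<omega>/3 * fst (snd z), \<omega> * snd (snd z))"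
    using P3ok_poly2[OF g T1 T2 fin] unfolding P3ok_def by blast
  have "\<forall>c. finite {\<alpha>. c \<alpha> \<noteq> 0} \<longrightarrow>
        onorm (poly3_op c S1 S2 P) \<le> (SUP z\<in>Gamma3. cmod (poly3_eval c z))"
    using g3 unfolding gamma3_contraction_def by (elim conjE) assumption
  then have "onorm (poly3_op c3 S1 S2 P) \<le> (SUP z\<in>Gamma3. cmod (poly3_eval c3 z))"
    using c3(1) by blast
  moreover have "poly3_op c3 S1 S2 P = poly2_op c T1 T2" using c3(2) by auto
  ultimately have "onorm (poly2_op c T1 T2) \<le> (SUP z\<in>Gamma3. cmod (poly3_eval c3 z))" by simp
  also have "\<dots> \<le> (SUP w\<in>Gamma2. cmod (poly2_eval c w))"
  proof (rule cSUP_least[OF Gamma3_ne])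
    fix z assume z: "z \<in> Gamma3"
    obtain s1 s2 p where zz: "z = (s1, s2, p)" by (cases z) auto
    have "(1/3 * s1 + \<omega>/3 * s2, \<omega> * p) \<in> Gamma2" using phi_Gamma3[OF om] z zz by simp
    have "cmod (poly3_eval c3 z) = cmod (poly2_eval c (1/3 * s1 + \<omega>/3 * s2, \<omega> * p))"
      using spec[OF c3(3), of z] zz by simp
    also have "\<dots> \<le> (SUP w\<in>Gamma2. cmod (poly2_eval c w))"
      by (rule cSUP_upper[OF \<open>(1/3 * s1 + \<omega>/3 * s2, \<omega> * p) \<in> Gamma2\<close> bdd_poly2_Gamma2[OF fin]])
    finally show "cmod (poly3_eval c3 z) \<le> (SUP w\<in>Gamma2. cmod (poly2_eval c w))" .
  qed
  finally show ?thesis .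
qed

definition P2ev :: "(complex \<times> complex \<Rightarrow> complex) \<Rightarrow> bool" where
  "P2ev g \<longleftrightarrow> (\<exists>c. finite {\<alpha>. c \<alpha> \<noteq> 0} \<and> (\<forall>w. poly2_eval c w = g w))"

lemma P2ev_cong: "P2ev g \<Longrightarrow> (\<And>w. g w = g' w) \<Longrightarrow> P2ev g'"
proof -
  assume "P2ev g" "\<And>w. g w = g' w"
  then have "g = g'" by auto
  then show ?thesis using \<open>P2ev g\<close> by simp
qed

lemma P2ev_const: "P2ev (\<lambda>w. k)"
proof -
  define c :: "nat \<times> nat \<Rightarrow> complex" where "c = (\<lambda>\<alpha>. if \<alpha> = (0,0) then k else 0)"
  have s: "{\<alpha>. c \<alpha> \<noteq> 0} \<subseteq> {(0,0)}" by (auto simp: c_def)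
  have f: "finite {\<alpha>. c \<alpha> \<noteq> 0}" using finite_subset[OF s] by simp
  have "poly2_eval c w = k" for w
    unfolding poly2_eval_alt[OF _ s, simplified] by (simp add: c_def)
  then show ?thesis unfolding P2ev_def using f by blast
qed

lemma P2ev_add: "P2ev g \<Longrightarrow> P2ev h \<Longrightarrow> P2ev (\<lambda>w. g w + h w)"
proof -
  assume "P2ev g" "P2ev h"
  then obtain c d where c: "finite {\<alpha>. c \<alpha> \<noteq> 0}" "\<forall>w. poly2_eval c w = g w"
    and d: "finite {\<alpha>. d \<alpha> \<noteq> 0}" "\<forall>w. poly2_eval d w = h w"
    unfolding P2ev_def by blast
  let ?U = "{\<alpha>. c \<alpha> \<noteq> 0} \<union> {\<alpha>. d \<alpha> \<noteq> 0}"
  have fU: "finite ?U" using c d by simp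
  have s: "{\<alpha>. c \<alpha> + d \<alpha> \<noteq> 0} \<subseteq> ?U" by auto
  show ?thesis unfolding P2ev_def
  proof (intro exI[of _ "\<lambda>\<alpha>. c \<alpha> + d \<alpha>"] conjI allI)
    show "finite {\<alpha>. c \<alpha> + d \<alpha> \<noteq> 0}" using finite_subset[OF s fU] .
    fix w
    show "poly2_eval (\<lambda>\<alpha>. c \<alpha> + d \<alpha>) w = g w + h w"
      using spec[OF c(2), of w] spec[OF d(2), of w] poly2_eval_alt[OF fU s, of w] poly2_eval_alt[OF fU, of c w] poly2_eval_alt[OF fU, of d w]
      by (simp add: distrib_right sum.distrib)
  qed
qed

lemma P2ev_scale: "P2ev g \<Longrightarrow> P2ev (\<lambda>w. k * g w)"
proof -
  assume "P2ev g"
  then obtain c where c: "finite {\<alpha>. c \<alpha> \<noteq> 0}" "\<forall>w. poly2_eval c w = g w"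
    unfolding P2ev_def by blast
  have s: "{\<alpha>. k * c \<alpha> \<noteq> 0} \<subseteq> {\<alpha>. c \<alpha> \<noteq> 0}" by auto
  show ?thesis unfolding P2ev_def
  proof (intro exI[of _ "\<lambda>\<alpha>. k * c \<alpha>"] conjI allI)
    show "finite {\<alpha>. k * c \<alpha> \<noteq> 0}" using finite_subset[OF s c(1)] .
    fix w
    show "poly2_eval (\<lambda>\<alpha>. k * c \<alpha>) w = k * g w"
      using spec[OF c(2), of w] poly2_eval_alt[OF c(1) s, of w] poly2_eval_alt[OF c(1), of c w]
      by (simp add: sum_distrib_left[symmetric] mult.assoc)
  qed
qed

lemma P2ev_shift:
  fixes h :: "nat \<times> nat \<Rightarrow> nat \<times> nat" and q :: "complex \<times> complex \<Rightarrow> complex"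
  assumes inj: "inj h"
    and he: "\<And>\<alpha> w. fst w ^ fst (h \<alpha>) * snd w ^ snd (h \<alpha>) = q w * (fst w ^ fst \<alpha> * snd w ^ snd \<alpha>)"
    and ok: "P2ev g"
  shows "P2ev (\<lambda>w. q w * g w)"
proof -
  from ok obtain c where c: "finite {\<alpha>. c \<alpha> \<noteq> 0}" "\<forall>w. poly2_eval c w = g w"
    unfolding P2ev_def by blast
  define c' where "c' = (\<lambda>\<beta>. if \<beta> \<in> range h then c (inv h \<beta>) else 0)"
  have c'h: "c' (h \<alpha>) = c \<alpha>" for \<alpha> using inj by (simp add: c'_def)
  let ?U = "h ` {\<alpha>. c \<alpha> \<noteq> 0}"
  have fU: "finite ?U" using c(1) by simp
  have s: "{\<alpha>. c' \<alpha> \<noteq> 0} \<subseteq> ?U"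
  proof
    fix \<beta> assume "\<beta> \<in> {\<alpha>. c' \<alpha> \<noteq> 0}"
    then have "\<beta> \<in> range h" "c (inv h \<beta>) \<noteq> 0" by (auto simp: c'_def split: if_splits)
    then show "\<beta> \<in> ?U" by (intro image_eqI[of _ _ "inv h \<beta>"]) (auto simp: f_inv_into_f)
  qed
  have injU: "inj_on h {\<alpha>. c \<alpha> \<noteq> 0}" using inj by (simp add: inj_on_def inj_def)
  show ?thesis unfolding P2ev_def
  proof (intro exI[of _ c'] conjI allI)
    show "finite {\<alpha>. c' \<alpha> \<noteq> 0}" using finite_subset[OF s fU] .
    fix w
    have "poly2_eval c' w = (\<Sum>\<alpha>\<in>?U. c' \<alpha> * (fst w ^ fst \<alpha> * snd w ^ snd \<alpha>))"
      by (rule poly2_eval_alt[OF fU s])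
    also have "\<dots> = (\<Sum>\<alpha>\<in>{\<alpha>. c \<alpha> \<noteq> 0}. c \<alpha> * (q w * (fst w ^ fst \<alpha> * snd w ^ snd \<alpha>)))"
      by (simp add: sum.reindex[OF injU] c'h he)
    also have "\<dots> = q w * (\<Sum>\<alpha>\<in>{\<alpha>. c \<alpha> \<noteq> 0}. c \<alpha> * (fst w ^ fst \<alpha> * snd w ^ snd \<alpha>))"
      by (simp add: sum_distrib_left algebra_simps)
    also have "\<dots> = q w * g w" using spec[OF c(2), of w] poly2_eval_alt[OF c(1) order_refl, of w] by simp
    finally show "poly2_eval c' w = q w * g w" .
  qed
qed

lemma P2ev_fst: "P2ev g \<Longrightarrow> P2ev (\<lambda>w. fst w * g w)"
  by (rule P2ev_shift[where h="\<lambda>\<alpha>. (Suc (fst \<alpha>), snd \<alpha>)"]) (auto simp: inj_def prod_eq_iff)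

lemma P2ev_snd: "P2ev g \<Longrightarrow> P2ev (\<lambda>w. snd w * g w)"
  by (rule P2ev_shift[where h="\<lambda>\<alpha>. (fst \<alpha>, Suc (snd \<alpha>))"]) (auto simp: inj_def prod_eq_iff)

fun pw :: "nat \<Rightarrow> complex \<times> complex \<Rightarrow> complex" where
  "pw 0 = (\<lambda>w. 2)"
| "pw (Suc 0) = (\<lambda>w. fst w)"
| "pw (Suc (Suc n)) = (\<lambda>w. fst w * pw (Suc n) w - snd w * pw n w)"

lemma pw_roots: "pw n (z1 + z2, z1 * z2) = z1 ^ n + z2 ^ n"
  by (induction n rule: pw.induct) (auto simp: algebra_simps)

lemma P2ev_pw: "P2ev (pw n)"
proof (induction n rule: pw.induct)
  case 1 show ?case by (rule P2ev_cong[OF P2ev_const[of 2]]) simp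
next
  case 2 then show ?case using P2ev_fst[OF P2ev_const[of 1]] by (rule P2ev_cong) simp
next
  case (3 n)
  have "P2ev (\<lambda>w. fst w * pw (Suc n) w + (-1) * (snd w * pw n w))"
    by (intro P2ev_add P2ev_scale P2ev_fst P2ev_snd 3)
  then show ?case by (rule P2ev_cong) simp
qed

lemma separate:
  assumes "(l0, l1) \<notin> Gamma2"
  shows "\<exists>c. finite {\<alpha>. c \<alpha> \<noteq> 0} \<and> (SUP w\<in>Gamma2. cmod (poly2_eval c w)) < cmod (poly2_eval c (l0, l1))"
proof (cases "cmod l1 > 1")
  case True
  have "P2ev (\<lambda>w. snd w)" using P2ev_snd[OF P2ev_const[of 1]] by (rule P2ev_cong) simp
  then obtain c where c: "finite {\<alpha>. c \<alpha> \<noteq> 0}" "\<forall>w. poly2_eval c w = snd w" unfolding P2ev_def by blast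
  have "(SUP w\<in>Gamma2. cmod (poly2_eval c w)) \<le> 1"
  proof (rule cSUP_least[OF Gamma2_ne])
    fix w assume "w \<in> Gamma2"
    then show "cmod (poly2_eval c w) \<le> 1" using spec[OF c(2), of w] Gamma2_bounds[of "fst w" "snd w"] by simp
  qed
  with True c show ?thesis by (intro exI[of _ c]) auto
next
  case False
  define d where "d = csqrt (l0^2 - 4 * l1)"
  define w1 where "w1 = (l0 + d) / 2"
  define w2 where "w2 = (l0 - d) / 2"
  have dd: "d^2 = l0^2 - 4 * l1" by (simp add: d_def)
  have sum: "w1 + w2 = l0" by (simp add: w1_def w2_def field_simps)
  have prod: "w1 * w2 = l1"
  proof -
    have "w1 * w2 = (l0^2 - d^2) / 4" by (simp add: w1_def w2_def field_simps power2_eq_square)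
    then show ?thesis by (simp add: dd)
  qed
  have nb: "\<not> (cmod w1 \<le> 1 \<and> cmod w2 \<le> 1)"
  proof
    assume h: "cmod w1 \<le> 1 \<and> cmod w2 \<le> 1"
    have "(w1 + w2, w1 * w2) \<in> Gamma2" unfolding Gamma2_def using h by blast
    then show False using assms sum prod by simp
  qed
  obtain w w' where ww: "cmod w > 1" "w + w' = l0" "w * w' = l1"
  proof (cases "cmod w1 > 1")
    case True then show ?thesis using that sum prod by blast
  next
    case False
    then have "cmod w2 > 1" using nb by simp
    then show ?thesis using that[of w2 w1] sum prod by (simp add: add.commute mult.commute)
  qed
  have wl: "cmod w * cmod w' \<le> 1" using ww False by (simp add: norm_mult[symmetric])
  have w'1: "cmod w' \<le> 1"
  proof (rule ccontr)
    assume "\<not> cmod w' \<le> 1"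
    then have "1 < cmod w * cmod w'" using ww(1) by (intro less_1_mult) auto
    then show False using wl by simp
  qed
  obtain N where N: "3 < cmod w ^ N" using real_arch_pow[OF ww(1)] by blast
  obtain c where c: "finite {\<alpha>. c \<alpha> \<noteq> 0}" "\<forall>v. poly2_eval c v = pw N v"
    using P2ev_pw[of N] unfolding P2ev_def by blast
  have "(SUP v\<in>Gamma2. cmod (poly2_eval c v)) \<le> 2"
  proof (rule cSUP_least[OF Gamma2_ne])
    fix v assume "v \<in> Gamma2"
    then obtain z1 z2 where z: "v = (z1 + z2, z1 * z2)" "cmod z1 \<le> 1" "cmod z2 \<le> 1"
      unfolding Gamma2_def by auto
    have "cmod (z1 ^ N + z2 ^ N) \<le> cmod z1 ^ N + cmod z2 ^ N"
      using norm_triangle_ineq[of "z1^N" "z2^N"] by (simp add: norm_power)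
    also have "\<dots> \<le> 1 + 1" using z by (intro add_mono power_le_one) auto
    finally show "cmod (poly2_eval c v) \<le> 2" using spec[OF c(2), of v] z pw_roots by simp
  qed
  moreover have "cmod (poly2_eval c (l0, l1)) > 2"
  proof -
    have "cmod w ^ N - cmod w' ^ N \<le> cmod (w ^ N + w' ^ N)"
      using norm_diff_ineq[of "w^N" "w'^N"] by (simp add: norm_power)
    moreover have "cmod w' ^ N \<le> 1" using w'1 by (simp add: power_le_one)
    ultimately have "cmod (w ^ N + w' ^ N) > 2" using N by linarith
    then show ?thesis using spec[OF c(2), of "(l0, l1)"] pw_roots[of N w w'] ww by simp
  qed
  ultimately show ?thesis using c(1) by (intro exI[of _ c]) auto
qed

definition QF :: "('a::complex_inner \<Rightarrow> 'a) \<Rightarrow> ('a \<Rightarrow> 'a) \<Rightarrow> complex \<Rightarrow> complex \<Rightarrow> ('a \<Rightarrow> 'a) \<Rightarrow> complex \<Rightarrow> bool" where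
  "QF T1 T2 l0 l1 F \<mu> \<longleftrightarrow> (\<exists>G0 G1. bounded_clinear G0 \<and> bounded_clinear G1 \<and>
     (\<forall>x. G0 (T1 x) = T1 (G0 x)) \<and> (\<forall>x. G0 (T2 x) = T2 (G0 x)) \<and>
     (\<forall>x. G1 (T1 x) = T1 (G1 x)) \<and> (\<forall>x. G1 (T2 x) = T2 (G1 x)) \<and>
     (\<forall>x. F x - scaleC \<mu> x = (T1 (G0 x) - scaleC l0 (G0 x)) + (T2 (G1 x) - scaleC l1 (G1 x))))"

lemma QF_cong: "QF T1 T2 l0 l1 F \<mu> \<Longrightarrow> (\<And>x. F x = F' x) \<Longrightarrow> \<mu> = \<mu>' \<Longrightarrow> QF T1 T2 l0 l1 F' \<mu>'"
proof -
  assume "QF T1 T2 l0 l1 F \<mu>" "\<And>x. F x = F' x" "\<mu> = \<mu>'"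
  then have "F = F'" by auto
  then show ?thesis using \<open>QF T1 T2 l0 l1 F \<mu>\<close> \<open>\<mu> = \<mu>'\<close> by simp
qed

context
  fixes T1 T2 :: "'a::complex_inner \<Rightarrow> 'a" and l0 l1 :: complex
  assumes bT1: "bounded_clinear T1" and bT2: "bounded_clinear T2"
    and c12: "\<And>x. T1 (T2 x) = T2 (T1 x)"
begin

lemma QF_id: "QF T1 T2 l0 l1 (\<lambda>x. x) 1"
  unfolding QF_def
  by (rule exI[of _ "\<lambda>x. 0"], rule exI[of _ "\<lambda>x. 0"])
     (simp add: bounded_clinear_const0 bounded_clinear_zero[OF bT1] bounded_clinear_zero[OF bT2] scaleC_one)

lemma QF_zero: "QF T1 T2 l0 l1 (\<lambda>x. 0) 0"
  unfolding QF_def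
  by (rule exI[of _ "\<lambda>x. 0"], rule exI[of _ "\<lambda>x. 0"])
     (simp add: bounded_clinear_const0 bounded_clinear_zero[OF bT1] bounded_clinear_zero[OF bT2])

lemma QF_add: "QF T1 T2 l0 l1 F \<mu> \<Longrightarrow> QF T1 T2 l0 l1 F' \<mu>' \<Longrightarrow> QF T1 T2 l0 l1 (\<lambda>x. F x + F' x) (\<mu> + \<mu>')"
proof -
  assume "QF T1 T2 l0 l1 F \<mu>" "QF T1 T2 l0 l1 F' \<mu>'"
  then obtain G0 G1 H0 H1 where G: "bounded_clinear G0" "bounded_clinear G1"
     "\<forall>x. G0 (T1 x) = T1 (G0 x)" "\<forall>x. G0 (T2 x) = T2 (G0 x)"
     "\<forall>x. G1 (T1 x) = T1 (G1 x)" "\<forall>x. G1 (T2 x) = T2 (G1 x)"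
     "\<forall>x. F x - scaleC \<mu> x = (T1 (G0 x) - scaleC l0 (G0 x)) + (T2 (G1 x) - scaleC l1 (G1 x))"
   and H: "bounded_clinear H0" "bounded_clinear H1"
     "\<forall>x. H0 (T1 x) = T1 (H0 x)" "\<forall>x. H0 (T2 x) = T2 (H0 x)"
     "\<forall>x. H1 (T1 x) = T1 (H1 x)" "\<forall>x. H1 (T2 x) = T2 (H1 x)"
     "\<forall>x. F' x - scaleC \<mu>' x = (T1 (H0 x) - scaleC l0 (H0 x)) + (T2 (H1 x) - scaleC l1 (H1 x))"
    unfolding QF_def by blast
  show ?thesis unfolding QF_def
  proof (rule exI[of _ "\<lambda>x. G0 x + H0 x"], rule exI[of _ "\<lambda>x. G1 x + H1 x"], intro conjI allI)
    show "bounded_clinear (\<lambda>x. G0 x + H0 x)" "bounded_clinear (\<lambda>x. G1 x + H1 x)"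
      using G H by (auto intro: bounded_clinear_plus)
    fix x
    show "G0 (T1 x) + H0 (T1 x) = T1 (G0 x + H0 x)" "G0 (T2 x) + H0 (T2 x) = T2 (G0 x + H0 x)"
      "G1 (T1 x) + H1 (T1 x) = T1 (G1 x + H1 x)" "G1 (T2 x) + H1 (T2 x) = T2 (G1 x + H1 x)"
      using G H by (simp_all add: bounded_clinear_add[OF bT1] bounded_clinear_add[OF bT2])
    have "F x + F' x - scaleC (\<mu> + \<mu>') x = (F x - scaleC \<mu> x) + (F' x - scaleC \<mu>' x)"
      by (simp add: scaleC_add_left algebra_simps)
    also have "\<dots> = (T1 (G0 x) - scaleC l0 (G0 x) + (T2 (G1 x) - scaleC l1 (G1 x))) + (T1 (H0 x) - scaleC l0 (H0 x) + (T2 (H1 x) - scaleC l1 (H1 x)))"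
      using spec[OF G(7), of x] spec[OF H(7), of x] by (simp only:)
    also have "\<dots> = T1 (G0 x + H0 x) - scaleC l0 (G0 x + H0 x) + (T2 (G1 x + H1 x) - scaleC l1 (G1 x + H1 x))"
      by (simp add: bounded_clinear_add[OF bT1] bounded_clinear_add[OF bT2] scaleC_add_right algebra_simps)
    finally show "F x + F' x - scaleC (\<mu> + \<mu>') x = T1 (G0 x + H0 x) - scaleC l0 (G0 x + H0 x) + (T2 (G1 x + H1 x) - scaleC l1 (G1 x + H1 x))" .
  qed
qed

lemma QF_scale: "QF T1 T2 l0 l1 F \<mu> \<Longrightarrow> QF T1 T2 l0 l1 (\<lambda>x. scaleC k (F x)) (k * \<mu>)"
proof -
  assume "QF T1 T2 l0 l1 F \<mu>"
  then obtain G0 G1 where G: "bounded_clinear G0" "bounded_clinear G1"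
     "\<forall>x. G0 (T1 x) = T1 (G0 x)" "\<forall>x. G0 (T2 x) = T2 (G0 x)"
     "\<forall>x. G1 (T1 x) = T1 (G1 x)" "\<forall>x. G1 (T2 x) = T2 (G1 x)"
     "\<forall>x. F x - scaleC \<mu> x = (T1 (G0 x) - scaleC l0 (G0 x)) + (T2 (G1 x) - scaleC l1 (G1 x))"
    unfolding QF_def by blast
  show ?thesis unfolding QF_def
  proof (rule exI[of _ "\<lambda>x. scaleC k (G0 x)"], rule exI[of _ "\<lambda>x. scaleC k (G1 x)"], intro conjI allI)
    show "bounded_clinear (\<lambda>x. scaleC k (G0 x))" "bounded_clinear (\<lambda>x. scaleC k (G1 x))"
      using G by (auto intro: bounded_clinear_smult)
    fix x
    show "scaleC k (G0 (T1 x)) = T1 (scaleC k (G0 x))" "scaleC k (G0 (T2 x)) = T2 (scaleC k (G0 x))"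
      "scaleC k (G1 (T1 x)) = T1 (scaleC k (G1 x))" "scaleC k (G1 (T2 x)) = T2 (scaleC k (G1 x))"
      using G by (simp_all add: bounded_clinear_scaleC[OF bT1] bounded_clinear_scaleC[OF bT2])
    have "scaleC k (F x) - scaleC (k * \<mu>) x = scaleC k (F x - scaleC \<mu> x)"
      by (simp add: scaleC_diff_right scaleC_scaleC)
    also have "\<dots> = T1 (scaleC k (G0 x)) - scaleC l0 (scaleC k (G0 x)) + (T2 (scaleC k (G1 x)) - scaleC l1 (scaleC k (G1 x)))"
      using G(7) by (simp add: bounded_clinear_scaleC[OF bT1] bounded_clinear_scaleC[OF bT2]
          scaleC_add_right scaleC_diff_right scaleC_scaleC mult.commute)
    finally show "scaleC k (F x) - scaleC (k * \<mu>) x = T1 (scaleC k (G0 x)) - scaleC l0 (scaleC k (G0 x)) + (T2 (scaleC k (G1 x)) - scaleC l1 (scaleC k (G1 x)))" .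
  qed
qed

lemma QF_T:
  fixes Q :: "'a \<Rightarrow> 'a" and lq :: complex
  assumes bQ: "bounded_clinear Q" and Q1: "\<And>x. Q (T1 x) = T1 (Q x)" and Q2: "\<And>x. Q (T2 x) = T2 (Q x)"
    and Qdec: "\<And>x. Q x - scaleC lq x = (T1 (D0 x) - scaleC l0 (D0 x)) + (T2 (D1 x) - scaleC l1 (D1 x))"
    and bD: "bounded_clinear D0" "bounded_clinear D1"
    and D0c: "\<And>x. D0 (T1 x) = T1 (D0 x)" "\<And>x. D0 (T2 x) = T2 (D0 x)"
    and D1c: "\<And>x. D1 (T1 x) = T1 (D1 x)" "\<And>x. D1 (T2 x) = T2 (D1 x)"
    and ok: "QF T1 T2 l0 l1 F \<mu>"
  shows "QF T1 T2 l0 l1 (\<lambda>x. Q (F x)) (lq * \<mu>)"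
proof -
  from ok obtain G0 G1 where G: "bounded_clinear G0" "bounded_clinear G1"
     "\<forall>x. G0 (T1 x) = T1 (G0 x)" "\<forall>x. G0 (T2 x) = T2 (G0 x)"
     "\<forall>x. G1 (T1 x) = T1 (G1 x)" "\<forall>x. G1 (T2 x) = T2 (G1 x)"
     "\<forall>x. F x - scaleC \<mu> x = (T1 (G0 x) - scaleC l0 (G0 x)) + (T2 (G1 x) - scaleC l1 (G1 x))"
    unfolding QF_def by blast
  define A0 where "A0 = (\<lambda>v. T1 v - scaleC l0 v)"
  define A1 where "A1 = (\<lambda>v. T2 v - scaleC l1 v)"
  have QA0: "Q (A0 v) = A0 (Q v)" for v
    by (simp add: A0_def bounded_clinear_diff[OF bQ] bounded_clinear_scaleC[OF bQ] Q1)
  have QA1: "Q (A1 v) = A1 (Q v)" for v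
    by (simp add: A1_def bounded_clinear_diff[OF bQ] bounded_clinear_scaleC[OF bQ] Q2)
  have A0add: "A0 (u + v) = A0 u + A0 v" for u v
    by (simp add: A0_def bounded_clinear_add[OF bT1] scaleC_add_right algebra_simps)
  have A1add: "A1 (u + v) = A1 u + A1 v" for u v
    by (simp add: A1_def bounded_clinear_add[OF bT2] scaleC_add_right algebra_simps)
  have A0sc: "A0 (scaleC k v) = scaleC k (A0 v)" for k v
    by (simp add: A0_def bounded_clinear_scaleC[OF bT1] scaleC_diff_right scaleC_scaleC mult.commute)
  have A1sc: "A1 (scaleC k v) = scaleC k (A1 v)" for k v
    by (simp add: A1_def bounded_clinear_scaleC[OF bT2] scaleC_diff_right scaleC_scaleC mult.commute)
  show ?thesis unfolding QF_def
  proof (rule exI[of _ "\<lambda>x. Q (G0 x) + scaleC \<mu> (D0 x)"], rule exI[of _ "\<lambda>x. Q (G1 x) + scaleC \<mu> (D1 x)"], intro conjI allI)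
    show "bounded_clinear (\<lambda>x. Q (G0 x) + scaleC \<mu> (D0 x))" "bounded_clinear (\<lambda>x. Q (G1 x) + scaleC \<mu> (D1 x))"
      by (rule bounded_clinear_plus[OF bounded_clinear_comp[OF bQ G(1)] bounded_clinear_smult[OF bD(1)]],
          rule bounded_clinear_plus[OF bounded_clinear_comp[OF bQ G(2)] bounded_clinear_smult[OF bD(2)]])
    fix x
    show "Q (G0 (T1 x)) + scaleC \<mu> (D0 (T1 x)) = T1 (Q (G0 x) + scaleC \<mu> (D0 x))"
      "Q (G0 (T2 x)) + scaleC \<mu> (D0 (T2 x)) = T2 (Q (G0 x) + scaleC \<mu> (D0 x))"
      "Q (G1 (T1 x)) + scaleC \<mu> (D1 (T1 x)) = T1 (Q (G1 x) + scaleC \<mu> (D1 x))"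
      "Q (G1 (T2 x)) + scaleC \<mu> (D1 (T2 x)) = T2 (Q (G1 x) + scaleC \<mu> (D1 x))"
      using G by (simp_all add: bounded_clinear_add[OF bT1] bounded_clinear_add[OF bT2]
            bounded_clinear_scaleC[OF bT1] bounded_clinear_scaleC[OF bT2] Q1 Q2 D0c D1c)
    have "Q (F x) - scaleC (lq * \<mu>) x = Q (F x - scaleC \<mu> x) + scaleC \<mu> (Q x - scaleC lq x)"
      by (simp add: bounded_clinear_diff[OF bQ] bounded_clinear_scaleC[OF bQ] scaleC_diff_right
          scaleC_scaleC mult.commute)
    also have "\<dots> = Q (A0 (G0 x) + A1 (G1 x)) + scaleC \<mu> (A0 (D0 x) + A1 (D1 x))"
      using G(7) Qdec by (simp add: A0_def A1_def)
    also have "\<dots> = A0 (Q (G0 x) + scaleC \<mu> (D0 x)) + A1 (Q (G1 x) + scaleC \<mu> (D1 x))"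
      by (simp only: bounded_clinear_add[OF bQ] QA0 QA1 A0add A1add A0sc A1sc scaleC_add_right add_ac)
    finally show "Q (F x) - scaleC (lq * \<mu>) x = T1 (Q (G0 x) + scaleC \<mu> (D0 x)) - scaleC l0 (Q (G0 x) + scaleC \<mu> (D0 x)) +
        (T2 (Q (G1 x) + scaleC \<mu> (D1 x)) - scaleC l1 (Q (G1 x) + scaleC \<mu> (D1 x)))"
      by (simp add: A0_def A1_def)
  qed
qed

lemma QF_T1: "QF T1 T2 l0 l1 F \<mu> \<Longrightarrow> QF T1 T2 l0 l1 (\<lambda>x. T1 (F x)) (l0 * \<mu>)"
  by (rule QF_T[OF bT1 _ _ _ bounded_clinear_ident bounded_clinear_const0])
     (simp_all add: c12 bounded_clinear_zero[OF bT1] bounded_clinear_zero[OF bT2])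

lemma QF_T2: "QF T1 T2 l0 l1 F \<mu> \<Longrightarrow> QF T1 T2 l0 l1 (\<lambda>x. T2 (F x)) (l1 * \<mu>)"
  by (rule QF_T[OF bT2 _ _ _ bounded_clinear_const0 bounded_clinear_ident])
     (simp_all add: c12 bounded_clinear_zero[OF bT1] bounded_clinear_zero[OF bT2])

lemma QF_mono: "QF T1 T2 l0 l1 (\<lambda>x. (T1 ^^ a) ((T2 ^^ b) x)) (l0 ^ a * l1 ^ b)"
proof -
  have B: "QF T1 T2 l0 l1 (\<lambda>x. (T2 ^^ b) x) (l1 ^ b)"
  proof (induction b)
    case 0 then show ?case using QF_id by simp
  next
    case (Suc b)
    show ?case using QF_T2[OF Suc] by (rule QF_cong) simp_all
  qed
  show ?thesis
  proof (induction a)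
    case 0 then show ?case using B by simp
  next
    case (Suc a)
    show ?case using QF_T1[OF Suc] by (rule QF_cong) (simp_all add: mult.assoc)
  qed
qed

lemma QF_sum:
  assumes "finite S" "\<And>\<alpha>. \<alpha> \<in> S \<Longrightarrow> QF T1 T2 l0 l1 (F \<alpha>) (g \<alpha>)"
  shows "QF T1 T2 l0 l1 (\<lambda>x. \<Sum>\<alpha>\<in>S. scaleC (k \<alpha>) (F \<alpha> x)) (\<Sum>\<alpha>\<in>S. k \<alpha> * g \<alpha>)"
  using assms
proof (induction S rule: finite_induct)
  case empty
  then show ?case using QF_zero by simp
next
  case (insert a S)
  have "QF T1 T2 l0 l1 (\<lambda>x. scaleC (k a) (F a x) + (\<Sum>\<alpha>\<in>S. scaleC (k \<alpha>) (F \<alpha> x)))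
         (k a * g a + (\<Sum>\<alpha>\<in>S. k \<alpha> * g \<alpha>))"
    using insert by (intro QF_add QF_scale) auto
  then show ?case using insert by (simp add: sum.insert)
qed

lemma QF_poly2:
  assumes fin: "finite {\<alpha>. c \<alpha> \<noteq> 0}"
  shows "QF T1 T2 l0 l1 (poly2_op c T1 T2) (poly2_eval c (l0, l1))"
proof -
  have "QF T1 T2 l0 l1 (\<lambda>x. \<Sum>\<alpha>\<in>{\<alpha>. c \<alpha> \<noteq> 0}. scaleC (c \<alpha>) ((T1 ^^ fst \<alpha>) ((T2 ^^ snd \<alpha>) x)))
     (\<Sum>\<alpha>\<in>{\<alpha>. c \<alpha> \<noteq> 0}. c \<alpha> * (l0 ^ fst \<alpha> * l1 ^ snd \<alpha>))"
    by (intro QF_sum fin QF_mono)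
  then show ?thesis
    by (rule QF_cong) (simp_all add: poly2_op_alt[OF fin order_refl] poly2_eval_alt[OF fin order_refl])
qed

end

lemma invertible_shift:
  fixes F :: "'a::chilbert_space \<Rightarrow> 'a"
  assumes bF: "bounded_linear F" and lt: "onorm F < cmod \<mu>"
  shows "(\<forall>y. \<exists>x. F x - scaleC \<mu> x = y) \<and> (\<forall>x. F x - scaleC \<mu> x = 0 \<longrightarrow> x = 0)"
proof (intro conjI allI impI)
  have on: "0 \<le> onorm F" using onorm_pos_le[OF bF] .
  then have mu: "\<mu> \<noteq> 0" "cmod \<mu> > 0" using lt by auto
  interpret F: bounded_linear F by (rule bF)
  fix y
  define g where "g = (\<lambda>x. scaleC (1/\<mu>) (F x - y))"
  have "\<exists>!x. g x = x"
  proof (rule banach_fix_type)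
    show "0 \<le> onorm F / cmod \<mu>" using on mu by simp
    show "onorm F / cmod \<mu> < 1" using lt mu by simp
    show "\<forall>x x'. dist (g x) (g x') \<le> onorm F / cmod \<mu> * dist x x'"
    proof (intro allI)
      fix x x'
      have "g x - g x' = scaleC (1/\<mu>) ((F x - y) - (F x' - y))"
        by (simp only: g_def scaleC_diff_right)
      also have "(F x - y) - (F x' - y) = F (x - x')" by (simp add: F.diff)
      finally have "g x - g x' = scaleC (1/\<mu>) (F (x - x'))" .
      then have "dist (g x) (g x') = norm (F (x - x')) / cmod \<mu>"
        by (simp add: dist_norm norm_scaleC norm_divide)
      also have "\<dots> \<le> onorm F * norm (x - x') / cmod \<mu>"
        using onorm[OF bF, of "x - x'"] mu by (simp add: divide_right_mono)
      finally show "dist (g x) (g x') \<le> onorm F / cmod \<mu> * dist x x'" by (simp add: dist_norm)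
    qed
  qed
  then obtain x where x: "scaleC (1/\<mu>) (F x - y) = x" unfolding g_def by blast
  then have "scaleC \<mu> (scaleC (1/\<mu>) (F x - y)) = scaleC \<mu> x" by (rule arg_cong)
  then have "F x - y = scaleC \<mu> x" using mu by (simp add: scaleC_scaleC scaleC_one)
  then show "\<exists>x. F x - scaleC \<mu> x = y" by (intro exI[of _ x]) (simp add: algebra_simps)
next
  fix x
  assume "F x - scaleC \<mu> x = 0"
  then have e: "F x = scaleC \<mu> x" by simp
  have "cmod \<mu> * norm x \<le> onorm F * norm x" using onorm[OF bF, of x] e by (simp add: norm_scaleC)
  show "x = 0"
  proof (rule ccontr)
    assume "x \<noteq> 0"
    then have "norm x > 0" by simp
    then have "onorm F * norm x < cmod \<mu> * norm x" using lt by simp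
    then show False using \<open>cmod \<mu> * norm x \<le> onorm F * norm x\<close> by simp
  qed
qed

lemma subsets2:
  assumes "J \<subseteq> {..<2::nat}"
  shows "J = {} \<or> J = {0} \<or> J = {1} \<or> J = {0,1}"
proof -
  have "\<forall>x\<in>J. x = 0 \<or> x = 1" using assms by auto
  then show ?thesis by (cases "0 \<in> J"; cases "1 \<in> J") auto
qed

lemma card_sub2_0: "J \<subseteq> {..<2::nat} \<and> card J = 0 \<longleftrightarrow> J = {}"
proof
  assume h: "J \<subseteq> {..<2::nat} \<and> card J = 0"
  then have "finite J" using finite_subset by blast
  then show "J = {}" using h by simp
qed simp

lemma card_sub2_1: "J \<subseteq> {..<2::nat} \<and> card J = 1 \<longleftrightarrow> J = {0} \<or> J = {1}"
proof
  assume h: "J \<subseteq> {..<2::nat} \<and> card J = 1"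
  then show "J = {0} \<or> J = {1}" using subsets2[of J] by auto
qed auto

lemma card_sub2_2: "J \<subseteq> {..<2::nat} \<and> card J = 2 \<longleftrightarrow> J = {0,1}"
proof
  assume h: "J \<subseteq> {..<2::nat} \<and> card J = 2"
  then show "J = {0,1}" using subsets2[of J] by auto
qed auto

lemma card_sub2_3: "\<not> (J \<subseteq> {..<2::nat} \<and> card J = Suc (Suc (Suc k)))"
proof
  assume h: "J \<subseteq> {..<2::nat} \<and> card J = Suc (Suc (Suc k))"
  then show False using subsets2[of J] by auto
qed

context
  fixes T1 T2 :: "'a::complex_inner \<Rightarrow> 'a" and l :: "nat \<Rightarrow> complex"
begin

lemma kd_other: assumes "\<not> (J \<subseteq> {..<2} \<and> card J = Suc k)"
  shows "koszul_d 2 (\<lambda>i. if i = 0 then T1 else T2) l k x J = 0"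
  unfolding koszul_d_def by (rule if_not_P[OF assms])

lemma kd_0_0: "koszul_d 2 (\<lambda>i. if i = 0 then T1 else T2) l 0 x {0} = T1 (x {}) - scaleC (l 0) (x {})"
proof -
  have "{i \<in> {0::nat}. i < 0} = {}" by auto
  then show ?thesis by (simp add: koszul_d_def scaleC_one)
qed

lemma kd_0_1: "koszul_d 2 (\<lambda>i. if i = 0 then T1 else T2) l 0 x {1} = T2 (x {}) - scaleC (l 1) (x {})"
proof -
  have h: "{i::nat. i = Suc 0 \<and> i = 0} = {}" by auto
  show ?thesis by (simp add: koszul_d_def scaleC_one h)
qed

lemma kd_1_01: "koszul_d 2 (\<lambda>i. if i = 0 then T1 else T2) l 1 x {0,1} =
   (T1 (x {1}) - scaleC (l 0) (x {1})) - (T2 (x {0}) - scaleC (l 1) (x {0}))"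
proof -
  have s1: "{i \<in> {0::nat, 1}. i < 0} = {}" by auto
  have s2: "{i \<in> {0::nat, 1}. i < 1} = {0}" by auto
  have s3: "{0::nat, 1} - {0} = {1}" by auto
  have s4: "{0::nat, 1} - {1} = {0}" by auto
  have s5: "{i::nat. i = 0 \<and> (i = 0 \<or> i = Suc 0)} = {0}" by auto
  have s6: "{0::nat, Suc 0} - {Suc 0} = {0}" by auto
  have s7: "{0::nat, Suc 0} - {0} = {Suc 0}" by auto
  have "koszul_d 2 (\<lambda>i. if i = 0 then T1 else T2) l 1 x {0,1} =
     (\<Sum>j\<in>{0::nat,1}. scaleC ((-1) ^ card {i\<in>{0::nat,1}. i < j})
        ((if j = 0 then T1 else T2) (x ({0,1} - {j})) - scaleC (l j) (x ({0,1} - {j}))))"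
    by (simp add: koszul_d_def)
  also have "\<dots> = (T1 (x {1}) - scaleC (l 0) (x {1})) + scaleC (-1) (T2 (x {0}) - scaleC (l 1) (x {0}))"
    by (simp add: s1 s2 s3 s4 s5 s6 s7 scaleC_one)
  finally show ?thesis by (simp add: scaleC_minus1)
qed

lemma koszul2:
  fixes Ba Bb :: "'a \<Rightarrow> 'a"
  defines "A0 \<equiv> (\<lambda>v. T1 v - scaleC (l 0) v)" and "A1 \<equiv> (\<lambda>v. T2 v - scaleC (l 1) v)"
  assumes bT1: "bounded_clinear T1" and bT2: "bounded_clinear T2"
    and e1: "\<And>x. A0 (Ba x) + A1 (Bb x) = x"
    and c01: "\<And>x. A0 (Bb x) = Bb (A0 x)" and c10: "\<And>x. A1 (Ba x) = Ba (A1 x)"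
    and c00: "\<And>x. A0 (Ba x) = Ba (A0 x)" and c11: "\<And>x. A1 (Bb x) = Bb (A1 x)"
    and inj0: "\<And>x. A0 x = 0 \<Longrightarrow> A1 x = 0 \<Longrightarrow> x = 0"
  shows "koszul_exact 2 (\<lambda>i. if i = 0 then T1 else T2) l"
proof -
  let ?T = "\<lambda>i. if i = 0 then T1 else T2"
  have A0add: "A0 (u + v) = A0 u + A0 v" for u v
    by (simp add: A0_def bounded_clinear_add[OF bT1] scaleC_add_right algebra_simps)
  have A1add: "A1 (u + v) = A1 u + A1 v" for u v
    by (simp add: A1_def bounded_clinear_add[OF bT2] scaleC_add_right algebra_simps)
  have A1neg: "A1 (- u) = - A1 u" for u
    by (simp add: A1_def bounded_clinear_neg[OF bT2] scaleC_minus_right)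
  have d00: "koszul_d 2 ?T l 0 x {0} = A0 (x {})" for x unfolding A0_def by (rule kd_0_0)
  have d01: "koszul_d 2 ?T l 0 x {1} = A1 (x {})" for x unfolding A1_def by (rule kd_0_1)
  have d101: "koszul_d 2 ?T l 1 x {0,1} = A0 (x {1}) - A1 (x {0})" for x unfolding A0_def A1_def by (rule kd_1_01)
  show ?thesis unfolding koszul_exact_def
  proof (intro allI impI)
    fix k and x :: "nat set \<Rightarrow> 'a"
    assume k: "k \<le> 2" and h: "koszul_chain 2 k x \<and> koszul_d 2 ?T l k x = (\<lambda>_. 0)"
    have ch: "\<And>J. \<not> (J \<subseteq> {..<2} \<and> card J = k) \<Longrightarrow> x J = 0" using h by (simp add: koszul_chain_def)
    have dz: "\<And>J. koszul_d 2 ?T l k x J = 0" using h by simp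
    consider "k = 0" | "k = 1" | "k = 2" using k by linarith
    then show "if k = 0 then x = (\<lambda>_. 0)
         else (\<exists>y. koszul_chain 2 (k - 1) y \<and> koszul_d 2 ?T l (k - 1) y = x)"
    proof cases
      case 1
      have "A0 (x {}) = 0" using dz[of "{0}"] d00[of x] 1 by simp
      moreover have "A1 (x {}) = 0" using dz[of "{1}"] d01[of x] 1 by simp
      ultimately have x0: "x {} = 0" by (rule inj0)
      have xJ: "x J = 0" if "J \<noteq> {}" for J using ch[of J] that 1 card_sub2_0[of J] by blast
      have "x = (\<lambda>_. 0)"
      proof (rule ext)
        fix J show "x J = 0" using x0 xJ by (cases "J = {}") auto
      qed
      then show ?thesis using 1 by simp
    next
      case 2
      have eq: "A0 (x {1}) = A1 (x {0})" using dz[of "{0,1}"] d101[of x] 2 by simp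
      define y :: "nat set \<Rightarrow> 'a" where "y = (\<lambda>J. if J = {} then Ba (x {0}) + Bb (x {1}) else 0)"
      have "koszul_chain 2 0 y" unfolding koszul_chain_def y_def using card_sub2_0 by auto
      moreover have "koszul_d 2 ?T l 0 y = x"
      proof
        fix J
        show "koszul_d 2 ?T l 0 y J = x J"
        proof (cases "J \<subseteq> {..<2} \<and> card J = Suc 0")
          case True
          then have "J = {0} \<or> J = {1}" using card_sub2_1[of J] by simp
          then show ?thesis
          proof
            assume J: "J = {0}"
            have "A0 (y {}) = A0 (Ba (x {0})) + Bb (A0 (x {1}))" by (simp add: y_def A0add c01)
            also have "\<dots> = A0 (Ba (x {0})) + Bb (A1 (x {0}))" using eq by simp
            also have "\<dots> = A0 (Ba (x {0})) + A1 (Bb (x {0}))" by (simp only: c11)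
            also have "\<dots> = x {0}" by (rule e1)
            finally show ?thesis using J d00[of y] by simp
          next
            assume J: "J = {1}"
            have "A1 (y {}) = Ba (A1 (x {0})) + A1 (Bb (x {1}))" by (simp add: y_def A1add c10)
            also have "\<dots> = Ba (A0 (x {1})) + A1 (Bb (x {1}))" using eq by simp
            also have "\<dots> = A0 (Ba (x {1})) + A1 (Bb (x {1}))" by (simp only: c00)
            also have "\<dots> = x {1}" by (rule e1)
            finally show ?thesis using J d01[of y] by simp
          qed
        next
          case False
          then show ?thesis using kd_other[OF False] ch[of J] 2 by simp
        qed
      qed
      ultimately show ?thesis using 2 by auto
    next
      case 3
      define v where "v = x {0,1}"
      define y :: "nat set \<Rightarrow> 'a" where "y = (\<lambda>J. if J = {0} then - Bb v else if J = {1} then Ba v else 0)"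
      have "koszul_chain 2 1 y" unfolding koszul_chain_def y_def using card_sub2_1 by auto
      moreover have "koszul_d 2 ?T l 1 y = x"
      proof
        fix J
        show "koszul_d 2 ?T l 1 y J = x J"
        proof (cases "J \<subseteq> {..<2} \<and> card J = Suc 1")
          case True
          then have J: "J = {0,1}" using card_sub2_2[of J] by simp
          have "koszul_d 2 ?T l 1 y {0,1} = A0 (Ba v) + A1 (Bb v)"
            using d101[of y] by (simp add: y_def A1neg)
          then show ?thesis using J e1[of v] by (simp add: v_def)
        next
          case False
          have "\<not> (J \<subseteq> {..<2} \<and> card J = k)" using False 3 by (simp add: numeral_2_eq_2)
          then show ?thesis using kd_other[OF False] ch[of J] by simp
        qed
      qed
      ultimately show ?thesis using 3 by auto
    qed
  qed
qed

end

theorem mainTheorem16: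
  fixes S1 S2 P :: "'a::chilbert_space \<Rightarrow> 'a" and \<omega> :: complex
  assumes "gamma3_contraction S1 S2 P"
    and "cmod \<omega> = 1"
  shows "gamma2_contraction (\<lambda>x. scaleC (1/3) (S1 x) + scaleC (\<omega>/3) (S2 x)) (\<lambda>x. scaleC \<omega> (P x))"
proof -
  define T1 where "T1 = (\<lambda>x. scaleC (1/3) (S1 x) + scaleC (\<omega>/3) (S2 x))"
  define T2 where "T2 = (\<lambda>x::'a. scaleC \<omega> (P x))"
  have g: "bounded_clinear S1" "bounded_clinear S2" "bounded_clinear P"
    "S1 \<circ> S2 = S2 \<circ> S1" "S1 \<circ> P = P \<circ> S1" "S2 \<circ> P = P \<circ> S2"
    using assms(1) by (simp_all add: gamma3_contraction_def)
  have c13: "S1 (P x) = P (S1 x)" for x using fun_cong[OF g(5), of x] by simp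
  have c23: "S2 (P x) = P (S2 x)" for x using fun_cong[OF g(6), of x] by simp
  have bT1: "bounded_clinear T1" unfolding T1_def
    by (rule bounded_clinear_plus[OF bounded_clinear_smult[OF g(1)] bounded_clinear_smult[OF g(2)]])
  have bT2: "bounded_clinear T2" unfolding T2_def by (rule bounded_clinear_smult[OF g(3)])
  have cT: "T1 (T2 x) = T2 (T1 x)" for x
    unfolding T1_def T2_def
    by (simp add: bounded_clinear_scaleC[OF g(1)] bounded_clinear_scaleC[OF g(2)]
        bounded_clinear_scaleC[OF g(3)] bounded_clinear_add[OF g(3)] scaleC_add_right scaleC_scaleC
        mult.commute c13 c23)
  have "gamma2_contraction T1 T2"
    unfolding gamma2_contraction_def
  proof (intro conjI ballI allI impI)
    show "bounded_clinear T1" "bounded_clinear T2" by (fact bT1, fact bT2)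
    show "T1 \<circ> T2 = T2 \<circ> T1" by (rule ext) (simp add: cT)
  next
    fix c :: "nat \<times> nat \<Rightarrow> complex"
    assume "finite {\<alpha>. c \<alpha> \<noteq> 0}"
    then show "onorm (poly2_op c T1 T2) \<le> (SUP z\<in>Gamma2. cmod (poly2_eval c z))"
      by (rule onorm_poly2[OF assms T1_def T2_def])
  next
    fix lam assume lam: "lam \<in> taylor_spectrum 2 (\<lambda>i. if i = 0 then T1 else T2)"
    show "(lam 0, lam 1) \<in> Gamma2"
    proof (rule ccontr)
      assume notin: "(lam 0, lam 1) \<notin> Gamma2"
      obtain c where c: "finite {\<alpha>. c \<alpha> \<noteq> 0}"
        "(SUP w\<in>Gamma2. cmod (poly2_eval c w)) < cmod (poly2_eval c (lam 0, lam 1))"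
        using separate[OF notin] by blast
      define \<mu> where "\<mu> = poly2_eval c (lam 0, lam 1)"
      define F where "F = poly2_op c T1 T2"
      have bF: "bounded_clinear F" unfolding F_def by (rule bcl_poly2_op[OF bT1 bT2])
      have "onorm F \<le> (SUP w\<in>Gamma2. cmod (poly2_eval c w))"
        unfolding F_def by (rule onorm_poly2[OF assms T1_def T2_def c(1)])
      then have lt: "onorm F < cmod \<mu>" using c(2) by (simp add: \<mu>_def)
      note inv = invertible_shift[OF bounded_clinear_linear[OF bF] lt]
      define N where "N = (\<lambda>x. F x - scaleC \<mu> x)"
      define A0 where "A0 = (\<lambda>v. T1 v - scaleC (lam 0) v)"
      define A1 where "A1 = (\<lambda>v. T2 v - scaleC (lam 1) v)"
      have "\<exists>R. \<forall>y. N (R y) = y" using inv unfolding N_def by (intro choice) blast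
      then obtain R where R: "\<And>y. N (R y) = y" by blast
      have N0: "N x = 0 \<Longrightarrow> x = 0" for x using inv unfolding N_def by blast
      have Nadd: "N (u + v) = N u + N v" for u v
        unfolding N_def by (simp add: bounded_clinear_add[OF bF] scaleC_add_right algebra_simps)
      have Ndiff: "N (u - v) = N u - N v" for u v
        unfolding N_def by (simp add: bounded_clinear_diff[OF bF] scaleC_diff_right algebra_simps)
      have injN: "N u = N v \<Longrightarrow> u = v" for u v
        using N0[of "u - v"] Ndiff[of u v] by simp
      have QFc: "QF T1 T2 (lam 0) (lam 1) F \<mu>"
        unfolding F_def \<mu>_def by (rule QF_poly2[OF bT1 bT2 cT c(1)])
      then obtain G0 G1 where G: "bounded_clinear G0" "bounded_clinear G1"
         "\<forall>x. G0 (T1 x) = T1 (G0 x)" "\<forall>x. G0 (T2 x) = T2 (G0 x)"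
         "\<forall>x. G1 (T1 x) = T1 (G1 x)" "\<forall>x. G1 (T2 x) = T2 (G1 x)"
         "\<forall>x. F x - scaleC \<mu> x = (T1 (G0 x) - scaleC (lam 0) (G0 x)) + (T2 (G1 x) - scaleC (lam 1) (G1 x))"
        unfolding QF_def by blast
      have Ndec: "N x = A0 (G0 x) + A1 (G1 x)" for x
        using spec[OF G(7), of x] by (simp add: N_def A0_def A1_def)
      have GA: "G0 (A0 v) = A0 (G0 v)" "G0 (A1 v) = A1 (G0 v)" "G1 (A0 v) = A0 (G1 v)" "G1 (A1 v) = A1 (G1 v)" for v
        using G by (simp_all add: A0_def A1_def bounded_clinear_diff bounded_clinear_scaleC)
      have A0add: "A0 (u + v) = A0 u + A0 v" for u v
        by (simp add: A0_def bounded_clinear_add[OF bT1] scaleC_add_right algebra_simps)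
      have A1add: "A1 (u + v) = A1 u + A1 v" for u v
        by (simp add: A1_def bounded_clinear_add[OF bT2] scaleC_add_right algebra_simps)
      have AA: "A0 (A1 v) = A1 (A0 v)" for v
        by (simp add: A0_def A1_def bounded_clinear_diff[OF bT1] bounded_clinear_diff[OF bT2]
            bounded_clinear_scaleC[OF bT1] bounded_clinear_scaleC[OF bT2] cT scaleC_diff_right
            scaleC_scaleC mult.commute algebra_simps)
      have NA0: "N (A0 v) = A0 (N v)" for v
        by (simp add: Ndec GA A0add AA)
      have NA1: "N (A1 v) = A1 (N v)" for v
        by (simp add: Ndec GA A1add AA)
      have RA0: "R (A0 y) = A0 (R y)" for y
        by (rule injN) (simp add: R NA0)
      have RA1: "R (A1 y) = A1 (R y)" for y
        by (rule injN) (simp add: R NA1)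
      have G00: "G0 0 = 0" "G1 0 = 0" using G(1,2) by (simp_all add: bounded_clinear_zero)
      have N00: "N 0 = 0" using N0 Nadd[of 0 0] by simp
      have "koszul_exact 2 (\<lambda>i. if i = 0 then T1 else T2) lam"
      proof (rule koszul2[OF bT1 bT2, where Ba = "\<lambda>x. G0 (R x)" and Bb = "\<lambda>x. G1 (R x)"])
        fix x
        show "T1 (G0 (R x)) - scaleC (lam 0) (G0 (R x)) + (T2 (G1 (R x)) - scaleC (lam 1) (G1 (R x))) = x"
          using Ndec[of "R x"] R[of x] by (simp add: A0_def A1_def)
        show "T1 (G1 (R x)) - scaleC (lam 0) (G1 (R x)) = G1 (R (T1 x - scaleC (lam 0) x))"
          using GA(3)[of "R x"] RA0[of x] by (simp add: A0_def)
        show "T2 (G0 (R x)) - scaleC (lam 1) (G0 (R x)) = G0 (R (T2 x - scaleC (lam 1) x))"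
          using GA(2)[of "R x"] RA1[of x] by (simp add: A1_def)
        show "T1 (G0 (R x)) - scaleC (lam 0) (G0 (R x)) = G0 (R (T1 x - scaleC (lam 0) x))"
          using GA(1)[of "R x"] RA0[of x] by (simp add: A0_def)
        show "T2 (G1 (R x)) - scaleC (lam 1) (G1 (R x)) = G1 (R (T2 x - scaleC (lam 1) x))"
          using GA(4)[of "R x"] RA1[of x] by (simp add: A1_def)
      next
        fix x
        assume h: "T1 x - scaleC (lam 0) x = 0" "T2 x - scaleC (lam 1) x = 0"
        have "N x = A0 (G0 x) + A1 (G1 x)" by (rule Ndec)
        also have "\<dots> = G0 (A0 x) + G1 (A1 x)" by (simp add: GA)
        also have "\<dots> = 0" using h G00 by (simp add: A0_def A1_def)
        finally have "N x = N 0" using N00 by simp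
        then show "x = 0" by (rule injN)
      qed
      then show False using lam unfolding taylor_spectrum_def by simp
    qed
  qed
  then show ?thesis by (simp add: T1_def T2_def)
qed

end
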